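(* Let $0<p<1$ and let $Y_1,Y_2,\ldots$ be i.i.d. with $\Pr(Y_i=k)=(1-p)^kp$ for $k\ge0$. Let $L_n$ be the length of the longest gap in $\{Y_{(1)},Y_{(1)}+1,\ldots,Y_{(n)}\}$, where a gap is a maximal run of consecutive integers in this range not equal to any of $Y_1,\ldots,Y_n$ (and $L_n=0$ if there is none). Then \begin{align*} \mathbb{E}L_n&\in\left[\frac{(1-p)^2}{p}-\frac{(1-p)^{2n}}{1-(1-p)^n},\ \frac{1.5}{p}+1\right],\\ \mathbb{E}L_n^2&\in\left[\frac{2(1-p)^2}{p^2}-\frac{2(1-p)^{2n}}{(1-(1-p)^n)^2},\ \frac{3.3}{p^2}+\frac{3}{2p}+2\right],\\ \mathrm{Var}(L_n)&\in\left[0,\ \frac{3.3}{p^2}+\frac{3}{2p}+2-\left(\frac{(1-p)^2}{p}-\frac{(1-p)^{2n}}{1-(1-p)^n}\right)^2\right], \end{align*} so that, with $\tilde\in$ denoting asymptotic upper and lower bounds: as $n\to\infty$: $\mathbb{E}L_n\,\tilde\in\,\left[\frac{(1-p)^2}{p},\frac{1.5}{p}+1\right]$, $\mathbb{E}L_n^2\,\tilde\in\,\left[\frac{2(1-p)^2}{p^2},\frac{3.3}{p^2}+\frac{3}{2p}+2\right]$, $\mathrm{Var}(L_n)\,\tilde\in\,\left[0,\frac{2.3}{p^2}+\frac{5.5}{p}\right]$; as $p\to0^+$: $\mathbb{E}L_n\,\tilde\in\,\left[\frac{n-1}{np},\frac{1.5}{p}\right]$, $\mathbb{E}L_n^2\,\tilde\in\,\left[\frac{2n^2(1-p)^2-2}{n^2p^2},\frac{3.3}{p^2}\right]$,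 $\mathrm{Var}(L_n)\,\tilde\in\,\left[0,\frac{2.3n^2+2n-1}{n^2p^2}\right]$; as $p\to1^-$: $\mathbb{E}L_n\,\tilde\in\,[0,2.5]$, $\mathbb{E}L_n^2\,\tilde\in\,[0,6.8]$, $\mathrm{Var}(L_n)\,\tilde\in\,[0,6.8]$.
   Context: $Y_{(1)}$ and $Y_{(n)}$ denote the minimum and maximum of $Y_1,\ldots,Y_n$. *)

theory Defs
  imports "HOL-Probability.Probability"
begin

text \<open>Gaps of a finite nonempty set S of naturals within the range {Min S .. Max S}:
  a gap is a maximal run {a..b} of consecutive integers in the range none of which
  lies in S (maximality: a-1 and b+1 lie in S).\<close>

definition gap_lengths :: "nat set \<Rightarrow> nat set" where
  "gap_lengths S = {b - a + 1 | a b. Min S \<le> a \<and> a \<le> b \<and> b \<le> Max S \<and>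
      {a..b} \<inter> S = {} \<and> a - 1 \<in> S \<and> b + 1 \<in> S}"

definition longest_gap :: "nat set \<Rightarrow> nat" where
  "longest_gap S = Max ({0} \<union> gap_lengths S)"

definition L :: "nat \<Rightarrow> (nat \<Rightarrow> nat) \<Rightarrow> nat" where
  "L n y = longest_gap (y ` {1..n})"

end

theory Submission
  imports Defs "HOL-Probability.Probability"
begin

lemma pow_diff_upper:
  fixes u v :: real assumes "0 \<le> v" "v \<le> u"
  shows "u ^ n - v ^ n \<le> real n * (u - v) * u ^ (n - 1)"
proof (induction n)
  case 0 then show ?case by simp
next
  case (Suc n)
  have "u ^ Suc n - v ^ Suc n = u * (u ^ n - v ^ n) + (u - v) * v ^ n" by (simp add: algebra_simps)
  also have "\<dots> \<le> u * (real n * (u - v) * u ^ (n - 1)) + (u - v) * u ^ n"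
    using Suc assms by (intro add_mono mult_left_mono mult_left_mono power_mono) auto
  also have "\<dots> = real (Suc n) * (u - v) * u ^ (Suc n - 1)"
    by (cases n) (auto simp: algebra_simps)
  finally show ?case .
qed

lemma pow_diff_lower:
  fixes u v :: real assumes "0 \<le> v" "v \<le> u"
  shows "real n * (u - v) * v ^ (n - 1) \<le> u ^ n - v ^ n"
proof (induction n)
  case 0 then show ?case by simp
next
  case (Suc n)
  have "real (Suc n) * (u - v) * v ^ (Suc n - 1) = v * (real n * (u - v) * v ^ (n - 1)) + (u - v) * v ^ n"
    by (cases n) (auto simp: algebra_simps)
  also have "\<dots> \<le> u * (u ^ n - v ^ n) + (u - v) * v ^ n"
  proof -
    have "v * (real n * (u - v) * v ^ (n - 1)) \<le> v * (u ^ n - v ^ n)"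
      using Suc assms by (intro mult_left_mono) auto
    also have "\<dots> \<le> u * (u ^ n - v ^ n)"
      using assms by (intro mult_right_mono) (auto simp: power_mono)
    finally show ?thesis by simp
  qed
  also have "\<dots> = u ^ Suc n - v ^ Suc n" by (simp add: algebra_simps)
  finally show ?case .
qed

lemma pow_trapezoid:
  fixes u v :: real assumes "0 \<le> v" "v \<le> u"
  shows "2 * (u ^ n - v ^ n) \<le> real n * (u - v) * (u ^ (n - 1) + v ^ (n - 1))"
proof -
  have key: "u ^ i * v ^ (m - i) + u ^ (m - i) * v ^ i \<le> u ^ m + v ^ m" if "i \<le> m" for i m
  proof -
    have "(u ^ i - v ^ i) * (u ^ (m - i) - v ^ (m - i)) \<ge> 0"
      using assms by (intro mult_nonneg_nonneg) (auto simp: power_mono)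
    moreover have "u ^ i * u ^ (m - i) = u ^ m" "v ^ i * v ^ (m - i) = v ^ m"
      using that by (auto simp: power_add[symmetric])
    ultimately show ?thesis by (simp add: algebra_simps)
  qed
  show ?thesis
  proof (cases n)
    case 0 then show ?thesis by simp
  next
    case (Suc m)
    have eq: "u ^ n - v ^ n = (u - v) * (\<Sum>i<n. u ^ i * v ^ (n - 1 - i))"
      using power_diff_sumr2[of u n v] Suc by (simp add: mult.commute)
    have "2 * (\<Sum>i<n. u ^ i * v ^ (n - 1 - i)) = (\<Sum>i<n. u ^ i * v ^ (m - i)) + (\<Sum>i<n. u ^ (m - i) * v ^ i)"
    proof -
      have "(\<Sum>i<n. u ^ (m - i) * v ^ i) = (\<Sum>i<n. u ^ i * v ^ (m - i))"
        using Suc by (intro sum.reindex_bij_witness[of _ "\<lambda>i. m - i" "\<lambda>i. m - i"]) auto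
      then show ?thesis using Suc by simp
    qed
    also have "\<dots> = (\<Sum>i<n. u ^ i * v ^ (m - i) + u ^ (m - i) * v ^ i)" by (simp add: sum.distrib)
    also have "\<dots> \<le> (\<Sum>i<n. u ^ m + v ^ m)"
      using Suc by (intro sum_mono key) auto
    also have "\<dots> = real n * (u ^ (n - 1) + v ^ (n - 1))" using Suc by simp
    finally have "2 * (\<Sum>i<n. u ^ i * v ^ (n - 1 - i)) \<le> real n * (u ^ (n - 1) + v ^ (n - 1))" .
    then have "(u - v) * (2 * (\<Sum>i<n. u ^ i * v ^ (n - 1 - i))) \<le> (u - v) * (real n * (u ^ (n - 1) + v ^ (n - 1)))"
      using assms by (intro mult_left_mono) auto
    then show ?thesis by (simp add: eq algebra_simps)
  qed
qed

lemma sums_odd_geom: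
  fixes x :: real assumes "\<bar>x\<bar> < 1"
  shows "(\<lambda>j. (2 * real j + 1) * x ^ j) sums ((1 + x) / (1 - x)\<^sup>2)"
proof -
  have a: "(\<lambda>n. of_nat (Suc n) * x ^ n) sums (1 / (1 - x)^2)"
    using geometric_deriv_sums[of x] assms by simp
  have b: "(\<lambda>n. x ^ n) sums (1 / (1 - x))" using geometric_sums[of x] assms by simp
  have "(\<lambda>n. 2 * (of_nat (Suc n) * x ^ n) - x ^ n) sums (2 * (1 / (1 - x)^2) - 1 / (1 - x))"
    by (intro sums_diff sums_mult a b)
  moreover have "2 * (1 / (1 - x)^2) - 1 / (1 - x) = (1 + x) / (1 - x)\<^sup>2"
  proof -
    have "1 - x \<noteq> 0" using assms by auto
    then show ?thesis by (simp add: field_simps) (simp add: power2_eq_square power4_eq_xxxx algebra_simps)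
  qed
  ultimately show ?thesis by (simp add: algebra_simps)
qed

lemma sum_odd_nat: "(\<Sum>i<m. 2 * real i + 1) = real m ^ 2"
  by (induction m) (auto simp: power2_eq_square algebra_simps)

lemma upper_series_big:
  fixes p :: real and P :: "nat \<Rightarrow> real"
  assumes p: "1/4 \<le> p" "p < 1" and P0: "\<And>k. 0 \<le> P k" and P1: "\<And>k. P k \<le> 1"
    and Pt: "\<And>k. P k \<le> (1-p)^(Suc k) / (1 - (1-p)^(Suc k))"
  shows "summable P \<and> suminf P \<le> 1.5/p + 1 \<and> summable (\<lambda>k. (2*real k+1) * P k)
      \<and> (\<Sum>k. (2*real k+1) * P k) \<le> 3.3/p^2 + 3/(2*p) + 2"
proof -
  define q where "q = 1 - p"
  have q: "0 < q" "q \<le> 3/4" using p by (auto simp: q_def)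
  have q916: "q^2 \<le> 9/16"
  proof -
    have "q^2 \<le> (3/4)^2" using q by (intro power_mono) auto
    then show ?thesis by (simp add: power2_eq_square)
  qed
  have q2: "0 < 1 - q^2" using q916 by simp
  have PS: "P (Suc k) \<le> q^2 / (1 - q^2) * q ^ k" for k
  proof -
    have "q ^ Suc (Suc k) \<le> q ^ 2" using q by (intro power_decreasing) auto
    then have "1 - q^2 \<le> 1 - q ^ Suc (Suc k)" by simp
    then have "q ^ Suc (Suc k) / (1 - q ^ Suc (Suc k)) \<le> q ^ Suc (Suc k) / (1 - q^2)"
      using q q2 by (intro divide_left_mono) auto
    also have "\<dots> = q^2 / (1 - q^2) * q ^ k" by (simp add: power2_eq_square field_simps)
    finally show ?thesis using Pt[of "Suc k"] by (simp add: q_def)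
  qed
  have g: "(\<lambda>k. q ^ k) sums (1 / (1 - q))" using geometric_sums[of q] q by simp
  have g1: "(\<lambda>k. q^2 / (1 - q^2) * q ^ k) sums (q^2 / (1 - q^2) * (1 / (1 - q)))"
    by (intro sums_mult g)
  have sP: "summable (\<lambda>k. P (Suc k))"
    by (rule summable_comparison_test[OF _ sums_summable[OF g1]]) (use PS P0 in auto)
  then have sumP: "summable P" by (simp add: summable_Suc_iff)
  have "suminf P = P 0 + (\<Sum>k. P (Suc k))" using suminf_split_head[OF sumP] by simp
  also have "\<dots> \<le> 1 + q^2 / (1 - q^2) * (1 / (1 - q))"
    using P1[of 0] suminf_le[OF PS sP sums_summable[OF g1]] sums_unique[OF g1] by simp
  also have "\<dots> \<le> 1.5/p + 1"
  proof -
    have "q^2 / (1 - q^2) \<le> 1.5" using q916 q2 by (simp add: divide_le_eq)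
    then have "q^2 / (1 - q^2) * (1 / p) \<le> 1.5 * (1/p)" using p by (intro mult_right_mono) auto
    then show ?thesis by (simp add: q_def)
  qed
  finally have b1: "suminf P \<le> 1.5/p + 1" .
  have g2: "(\<lambda>k. (2 * real k + 1) * q ^ k) sums ((1 + q) / (1 - q)\<^sup>2)"
    using sums_odd_geom[of q] q by simp
  have g3: "(\<lambda>k. q^2 / (1 - q^2) * ((2 * real k + 1) * q ^ k + 2 * q ^ k)) sums
      (q^2 / (1 - q^2) * ((1 + q) / (1 - q)\<^sup>2 + 2 * (1 / (1 - q))))"
    by (intro sums_mult sums_add g2 g)
  have PS2: "(2 * real (Suc k) + 1) * P (Suc k) \<le> q^2 / (1 - q^2) * ((2 * real k + 1) * q ^ k + 2 * q ^ k)" for k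
  proof -
    have "(2 * real (Suc k) + 1) * P (Suc k) \<le> (2 * real (Suc k) + 1) * (q^2 / (1 - q^2) * q ^ k)"
      by (intro mult_left_mono PS) auto
    also have "\<dots> = q^2 / (1 - q^2) * ((2 * real k + 1) * q ^ k + 2 * q ^ k)"
      by (simp only: of_nat_Suc) algebra
    finally show ?thesis .
  qed
  have sP2: "summable (\<lambda>k. (2 * real (Suc k) + 1) * P (Suc k))"
    by (rule summable_comparison_test[OF _ sums_summable[OF g3]]) (use PS2 P0 in auto)
  then have sumP2: "summable (\<lambda>k. (2*real k+1) * P k)"
    using summable_Suc_iff[of "\<lambda>k. (2*real k+1) * P k"] by simp
  have "(\<Sum>k. (2*real k+1) * P k) = P 0 + (\<Sum>k. (2 * real (Suc k) + 1) * P (Suc k))"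
    using suminf_split_head[OF sumP2] by simp
  also have "\<dots> \<le> 1 + q^2 / (1 - q^2) * ((1 + q) / (1 - q)\<^sup>2 + 2 * (1 / (1 - q)))"
    using P1[of 0] suminf_le[OF PS2 sP2 sums_summable[OF g3]] sums_unique[OF g3] by simp
  also have "\<dots> \<le> 3.3/p^2 + 3/(2*p) + 2"
  proof -
    have e: "q^2 / (1 - q^2) * ((1 + q) / (1 - q)\<^sup>2 + 2 * (1 / (1 - q))) = (1-p)^2 * (2 + p) / (p^3 * (2 - p))"
      using p by (simp add: q_def field_simps power2_eq_square power3_eq_cube)
    have id: "(3.3 * p + 1.5 * p^2 + p^3) * (2 - p) - (1-p)^2 * (2 + p) = -2 + 9.6*p - 0.3*p^2 - 0.5*p^3 - p^4"
      by (simp add: power2_eq_square power3_eq_cube power4_eq_xxxx) algebra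
    have h1: "0 \<le> (p - 1/4) * (1 - p)" using p by (intro mult_nonneg_nonneg) auto
    moreover have "(p - 1/4) * (1 - p) = 5/4*p - 1/4 - p^2" by (simp add: power2_eq_square) algebra
    ultimately have h1': "p^2 \<le> 5/4 * p - 1/4" by linarith
    have h2: "p^3 \<le> p^2" using p by (intro power_decreasing) auto
    have h3: "p^4 \<le> p^2" using p by (intro power_decreasing) auto
    have "0 \<le> -2 + 9.6*p - 0.3*p^2 - 0.5*p^3 - p^4"
      using h1' h2 h3 p by linarith
    then have "0 \<le> (3.3 * p + 1.5 * p^2 + p^3) * (2 - p) - (1-p)^2 * (2 + p)"
      using id by simp
    then have "(1-p)^2 * (2 + p) \<le> (3.3 * p + 1.5 * p^2 + p^3) * (2 - p)"
      by simp
    then have "(1-p)^2 * (2 + p) / (p^3 * (2 - p)) \<le> (3.3 * p + 1.5 * p^2 + p^3) * (2 - p) / (p^3 * (2 - p))"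
      using p by (intro divide_right_mono) auto
    also have "\<dots> = 3.3/p^2 + 3/(2*p) + 1"
      using p by (simp add: field_simps power2_eq_square power3_eq_cube)
    finally show ?thesis using e by simp
  qed
  finally show ?thesis using sumP b1 sumP2 by simp
qed

lemma one_minus_inv_le_ln: "0 < (y::real) \<Longrightarrow> 1 - 1/y \<le> ln y"
  using ln_le_minus_one[of "1/y"] by (simp add: ln_div)

lemma upper_series_small:
  fixes p :: real and P :: "nat \<Rightarrow> real"
  assumes p: "0 < p" "p < 1/4" and P0: "\<And>k. 0 \<le> P k" and P1: "\<And>k. P k \<le> 1"
    and Pt: "\<And>k. P k \<le> (1-p)^(Suc k) / (1 - (1-p)^(Suc k))"
  shows "summable P \<and> suminf P \<le> 1.5/p + 1 \<and> summable (\<lambda>k. (2*real k+1) * P k)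
      \<and> (\<Sum>k. (2*real k+1) * P k) \<le> 3.3/p^2 + 3/(2*p) + 2"
proof -
  define q where "q = 1 - p"
  have q: "3/4 < q" "q < 1" using p by (auto simp: q_def)
  define lam where "lam = ln (1/q)"
  have lam_eq: "lam = - ln q" using q by (simp add: lam_def ln_div)
  have lam_ge: "p \<le> lam" using ln_le_minus_one[of q] q by (simp add: lam_eq q_def)
  have lam_pos: "0 < lam" using lam_ge p by simp
  have lam_le: "lam \<le> p / q" using ln_le_minus_one[of "1/q"] q by (simp add: lam_def q_def field_simps)
  define \<Phi> where "\<Phi> j = - ln (1 - q ^ j) / lam" for j
  have qj: "0 < q ^ j" "q ^ j < 1" if "j \<ge> 1" for j
    using q that power_strict_decreasing[of 0 j q] by auto
  have \<Phi>_nonneg: "0 \<le> \<Phi> j" if "j \<ge> 1" for j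
  proof -
    have "ln (1 - q ^ j) \<le> 0" using qj[OF that] by (intro ln_le_zero_iff[THEN iffD2]) auto
    then show ?thesis using lam_pos by (simp add: \<Phi>_def divide_nonpos_pos)
  qed
  have \<Phi>_lim: "(\<lambda>j. \<Phi> (j + m)) \<longlonglongrightarrow> 0" for m
  proof -
    have "(\<lambda>j. q ^ (j + m)) \<longlonglongrightarrow> 0"
      using LIMSEQ_power_zero[of q] q by (intro LIMSEQ_ignore_initial_segment) auto
    then have "(\<lambda>j. - ln (1 - q ^ (j + m)) / lam) \<longlonglongrightarrow> - ln (1 - 0) / lam"
      using lam_pos by (intro tendsto_intros) auto
    then show ?thesis by (simp add: \<Phi>_def)
  qed
  have t\<Phi>: "q ^ Suc j / (1 - q ^ Suc j) \<le> \<Phi> j - \<Phi> (Suc j)" if "j \<ge> 1" for j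
  proof -
    define a where "a = q ^ j"
    define b where "b = q ^ Suc j"
    have ab: "0 < b" "b < a" "a < 1" "b = q * a"
      using qj[OF that] q by (auto simp: a_def b_def)
    have t0: "0 \<le> b / (1 - b)" using ab by simp
    have amb: "a - b = p * a" using ab by (simp add: q_def algebra_simps)
    have "1 - (1 - a) / (1 - b) = (a - b) / (1 - b)"
      using ab by (simp add: field_simps)
    also have "\<dots> = (p / q) * (b / (1 - b))"
    proof -
      have "(p / q) * (b / (1 - b)) = (p / q) * (q * a) / (1 - b)" using ab(4) by simp
      also have "\<dots> = p * a / (1 - b)" using q by simp
      finally have "(p / q) * (b / (1 - b)) = p * a / (1 - b)" .
      then show ?thesis using amb by simp
    qed
    finally have "1 - (1 - a) / (1 - b) = (p / q) * (b / (1 - b))" .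
    moreover have "1 - 1 / ((1 - b) / (1 - a)) \<le> ln ((1 - b) / (1 - a))"
      using ab by (intro one_minus_inv_le_ln) auto
    moreover have "ln ((1 - b) / (1 - a)) = ln (1 - b) - ln (1 - a)"
      using ab by (simp add: ln_div)
    ultimately have "(p / q) * (b / (1 - b)) \<le> ln (1 - b) - ln (1 - a)" by simp
    moreover have "lam * (b / (1 - b)) \<le> (p / q) * (b / (1 - b))"
      using lam_le t0 by (intro mult_right_mono) auto
    ultimately have "lam * (b / (1 - b)) \<le> ln (1 - b) - ln (1 - a)" by linarith
    then have "b / (1 - b) \<le> (ln (1 - b) - ln (1 - a)) / lam"
      using lam_pos by (simp add: field_simps)
    also have "\<dots> = \<Phi> j - \<Phi> (Suc j)"
      by (simp add: \<Phi>_def a_def b_def diff_divide_distrib)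
    finally show ?thesis by (simp add: b_def)
  qed
  have exK: "\<exists>k. q ^ k \<le> 1/2"
    using real_arch_pow_inv[of "1/2" q] q by (auto intro: less_imp_le)
  define K where "K = (LEAST k. q ^ k \<le> 1/2)"
  have K1: "q ^ K \<le> 1/2" unfolding K_def by (rule LeastI_ex[OF exK])
  have K2: "1/2 < q ^ k" if "k < K" for k
    using not_less_Least[OF that[unfolded K_def]] by simp
  have "K \<noteq> 0" using K1 by (intro notI) simp
  moreover have "K \<noteq> 1" using K1 q by (intro notI) simp
  ultimately obtain m where Km: "K = Suc m" and m1: "m \<ge> 1"
    by (cases K) auto
  define x where "x = q ^ m"
  have x1: "1/2 < x" using K2[of m] Km by (simp add: x_def)
  have x2: "q * x \<le> 1/2" using K1 Km by (simp add: x_def)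
  have x3: "x < 1" using qj[OF m1] by (simp add: x_def)
  define d where "d k = (if k < m then 1 else \<Phi> k - \<Phi> (Suc k))" for k
  have Pd: "P k \<le> d k" for k
  proof (cases "k < m")
    case True then show ?thesis using P1[of k] by (simp add: d_def)
  next
    case False
    then have "k \<ge> 1" using m1 by simp
    then show ?thesis using False Pt[of k] t\<Phi>[of k] by (simp add: d_def q_def)
  qed
  have dsh: "(\<lambda>j. d (j + m)) sums \<Phi> m"
  proof -
    have "(\<lambda>j. \<Phi> (j + m) - \<Phi> (Suc j + m)) sums (\<Phi> (0 + m) - 0)"
      by (rule telescope_sums'[OF \<Phi>_lim])
    then show ?thesis by (simp add: d_def)
  qed
  have dsum: "d sums (\<Phi> m + real m)"
  proof -
    have "(\<Sum>i<m. d i) = real m" by (simp add: d_def)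
    then show ?thesis using dsh sums_iff_shift[of d m "\<Phi> m"] by simp
  qed
  have sumP: "summable P"
    by (rule summable_comparison_test[OF _ sums_summable[OF dsum]]) (use Pd P0 in auto)
  have SP: "suminf P \<le> \<Phi> m + real m"
    using suminf_le[OF Pd sumP sums_summable[OF dsum]] sums_unique[OF dsum] by simp
  define C where "C = 25/18 + 2 * p^2"
  have S1: "\<Phi> m + real m \<le> C / p"
  proof -
    have e1: "lam * real m = - ln x" using lam_eq by (simp add: x_def ln_realpow)
    have e2: "lam * \<Phi> m = - ln (1 - x)" using lam_pos by (simp add: \<Phi>_def x_def)
    have lnm: "ln (x * (1 - x)) = ln x + ln (1 - x)" using x1 x3 by (intro ln_mult_pos) auto
    have "lam * (\<Phi> m + real m) = lam * \<Phi> m + lam * real m" by (simp add: distrib_left)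
    then have "lam * (\<Phi> m + real m) = - ln (x * (1 - x))"
      using e1 e2 lnm by linarith
    also have "\<dots> \<le> - ln ((1/(2*q)) * (1 - 1/(2*q)))"
    proof -
      define y where "y = 1/(2*q)"
      have y: "x \<le> y" "1/2 \<le> y" using x2 q by (auto simp: y_def field_simps)
      have "0 \<le> (y - x) * (x + y - 1)" using y x1 by (intro mult_nonneg_nonneg) auto
      then have "y * (1 - y) \<le> x * (1 - x)" by (simp add: algebra_simps)
      moreover have "0 < y * (1 - y)" using q by (simp add: y_def field_simps)
      ultimately have "ln (y * (1 - y)) \<le> ln (x * (1 - x))" by simp
      then show ?thesis by (simp add: y_def)
    qed
    also have "\<dots> = ln 4 + ln (q^2 / (2*q - 1))"
    proof -
      have "(1/(2*q)) * (1 - 1/(2*q)) = 1 / (4 * (q^2 / (2*q - 1)))"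
        using q by (simp add: field_simps power2_eq_square)
      then have "- ln ((1/(2*q)) * (1 - 1/(2*q))) = ln (4 * (q^2 / (2*q - 1)))"
        using q by (simp add: ln_div)
      also have "\<dots> = ln 4 + ln (q^2 / (2*q - 1))" using q by (intro ln_mult_pos) auto
      finally show ?thesis .
    qed
    also have "\<dots> \<le> C"
    proof -
      have "ln (4::real) = 2 * ln 2"
        using ln_realpow[of 2 2] by simp
      then have l4: "ln (4::real) \<le> 25/18" using ln2_le_25_over_36 by simp
      have "ln (q^2 / (2*q - 1)) \<le> q^2 / (2*q - 1) - 1"
        using q by (intro ln_le_minus_one) auto
      also have "\<dots> = p^2 / (1 - 2*p)" using q p by (simp add: q_def field_simps power2_eq_square)
      also have "\<dots> \<le> 2 * p^2"
        using p by (simp add: divide_le_eq)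
      finally show ?thesis using l4 by (simp add: C_def)
    qed
    finally have "lam * (\<Phi> m + real m) \<le> C" .
    then have "\<Phi> m + real m \<le> C / lam" using lam_pos by (simp add: field_simps)
    also have "\<dots> \<le> C / p" using lam_ge p by (intro divide_left_mono) (auto simp: C_def)
    finally show ?thesis .
  qed
  have b1: "suminf P \<le> 1.5/p + 1"
  proof -
    have "p * p \<le> p * (1/4)" using p by (intro mult_left_mono) auto
    then have "C \<le> 1.5 + p" unfolding C_def power2_eq_square using p by linarith
    then have "C / p \<le> (1.5 + p) / p" using p by (intro divide_right_mono) auto
    also have "\<dots> = 1.5/p + 1" using p by (simp add: field_simps)
    finally show ?thesis using SP S1 by linarith
  qed
  define R where "R = ((1 + q) / (1 - q)\<^sup>2 + (1 + q^2) / (1 - q^2)\<^sup>2) / 2"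
  define e where "e k = (if k < m then 2 * real k + 1 else
      2 * real m * (\<Phi> k - \<Phi> (Suc k)) + (2 * real (k - m) + 1) * ((q ^ (k - m) + (q^2) ^ (k - m)) / 2))" for k
  have Pe: "(2 * real k + 1) * P k \<le> e k" for k
  proof (cases "k < m")
    case True then show ?thesis using P1[of k] by (simp add: e_def)
  next
    case False
    define j where "j = k - m"
    have kmj: "k = m + j" using False by (simp add: j_def)
    have k1: "k \<ge> 1" using False m1 by simp
    define y where "y = q ^ Suc k"
    have y0: "0 \<le> y" using q by (simp add: y_def)
    have yle: "y \<le> q ^ j / 2"
    proof -
      have "y = q ^ Suc m * q ^ j" by (simp add: y_def kmj power_add)
      also have "\<dots> \<le> 1/2 * q ^ j" using K1 Km q by (intro mult_right_mono) auto
      finally show ?thesis by simp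
    qed
    have qj1: "q ^ j \<le> 1" using q by (simp add: power_le_one)
    have y12: "y \<le> 1/2" using yle qj1 by simp
    have ty: "y / (1 - y) \<le> (q ^ j + (q^2) ^ j) / 2"
    proof -
      have "y / (1 - y) \<le> y + 2 * y^2"
      proof -
        have "0 \<le> y^2 * (1 - 2 * y)" using y12 by (intro mult_nonneg_nonneg) auto
        moreover have "(y + 2 * y^2) * (1 - y) = y + y^2 * (1 - 2 * y)"
          by (simp add: power2_eq_square) algebra
        ultimately have "y \<le> (y + 2 * y^2) * (1 - y)" by linarith
        then show ?thesis using y12 by (simp add: divide_le_eq)
      qed
      also have "\<dots> \<le> q ^ j / 2 + 2 * (q ^ j / 2)^2"
        using yle y0 by (intro add_mono mult_left_mono power_mono) auto
      also have "\<dots> = (q ^ j + (q^2) ^ j) / 2"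
      proof -
        have "(q^2) ^ j = (q ^ j)^2" by (simp add: power_mult[symmetric] mult.commute)
        then show ?thesis by (simp add: power2_eq_square)
      qed
      finally show ?thesis .
    qed
    have t0: "0 \<le> y / (1 - y)" using y0 y12 by simp
    have "(2 * real k + 1) * P k \<le> (2 * real k + 1) * (y / (1 - y))"
      using Pt[of k] by (intro mult_left_mono) (auto simp: y_def q_def)
    also have "\<dots> = 2 * real m * (y / (1 - y)) + (2 * real j + 1) * (y / (1 - y))"
      by (simp add: kmj algebra_simps)
    also have "\<dots> \<le> 2 * real m * (\<Phi> k - \<Phi> (Suc k)) + (2 * real j + 1) * ((q ^ j + (q^2) ^ j) / 2)"
      using t\<Phi>[OF k1] ty by (intro add_mono mult_left_mono) (auto simp: y_def)
    finally show ?thesis using False by (simp add: e_def j_def)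
  qed
  have esh: "(\<lambda>j. e (j + m)) sums (2 * real m * \<Phi> m + R)"
  proof -
    have a: "(\<lambda>j. 2 * real m * (\<Phi> (j + m) - \<Phi> (Suc j + m))) sums (2 * real m * (\<Phi> (0 + m) - 0))"
      by (intro sums_mult telescope_sums'[OF \<Phi>_lim])
    have b: "(\<lambda>j. (2 * real j + 1) * q ^ j) sums ((1 + q) / (1 - q)\<^sup>2)"
      using sums_odd_geom[of q] q by simp
    have "q^2 < 1^2" using q by (intro power_strict_mono) auto
    then have "\<bar>q^2\<bar> < 1" by simp
    then have c: "(\<lambda>j. (2 * real j + 1) * (q^2) ^ j) sums ((1 + q^2) / (1 - q^2)\<^sup>2)"
      using sums_odd_geom[of "q^2"] by simp
    have "(\<lambda>j. 2 * real m * (\<Phi> (j + m) - \<Phi> (Suc j + m)) +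
        ((2 * real j + 1) * q ^ j + (2 * real j + 1) * (q^2) ^ j) / 2) sums
        (2 * real m * (\<Phi> (0 + m) - 0) + ((1 + q) / (1 - q)\<^sup>2 + (1 + q^2) / (1 - q^2)\<^sup>2) / 2)"
      by (intro sums_add a sums_divide b c)
    then show ?thesis by (simp add: e_def R_def algebra_simps add_divide_distrib)
  qed
  have esum: "e sums (2 * real m * \<Phi> m + R + real m ^ 2)"
  proof -
    have "(\<Sum>i<m. e i) = real m ^ 2" using sum_odd_nat[of m] by (simp add: e_def)
    then show ?thesis using esh sums_iff_shift[of e m] by simp
  qed
  have P2nn: "0 \<le> (2 * real k + 1) * P k" for k using P0[of k] by simp
  have sumP2: "summable (\<lambda>k. (2*real k+1) * P k)"
    by (rule summable_comparison_test[OF _ sums_summable[OF esum]]) (use Pe P2nn in auto)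
  have SP2: "(\<Sum>k. (2*real k+1) * P k) \<le> 2 * real m * \<Phi> m + R + real m ^ 2"
    using suminf_le[OF Pe sumP2 sums_summable[OF esum]] sums_unique[OF esum] by simp
  have b2: "2 * real m * \<Phi> m + R + real m ^ 2 \<le> 3.3/p^2 + 3/(2*p) + 2"
  proof -
    have "2 * real m * \<Phi> m + real m ^ 2 \<le> (\<Phi> m + real m)^2"
      using \<Phi>_nonneg[OF m1] by (simp add: power2_eq_square algebra_simps)
    also have "\<dots> \<le> (C / p)^2"
      using S1 \<Phi>_nonneg[OF m1] by (intro power_mono) auto
    finally have A: "2 * real m * \<Phi> m + real m ^ 2 \<le> C^2 / p^2" by (simp add: power_divide)
    have R_eq: "R = ((1 + q) / 2 + (1 + q^2) / (2 * (1 + q)^2)) / p^2"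
    proof -
      have e1: "(1 - q)^2 = p^2" by (simp add: q_def)
      have "1 - q^2 = p * (1 + q)" by (simp add: q_def power2_eq_square) algebra
      then have e2: "(1 - q^2)^2 = p^2 * (1 + q)^2" by (simp add: power_mult_distrib)
      have nz: "p^2 \<noteq> 0" "(1 + q)^2 \<noteq> 0" using p q by auto
      show ?thesis unfolding R_def e1 e2 using nz by (simp add: field_simps)
    qed
    have r52: "(1 + q^2) / (2 * (1 + q)^2) \<le> 13/50"
    proof -
      have "0 \<le> (q - 3/4) * (1 - q)" using q by (intro mult_nonneg_nonneg) auto
      moreover have "(q - 3/4) * (1 - q) = 7/4 * q - 3/4 - q^2" by (simp add: power2_eq_square) algebra
      ultimately have "q^2 \<le> 7/4 * q - 3/4" by linarith
      moreover have "(1 + q)^2 = 1 + 2 * q + q^2" by (simp add: power2_eq_square) algebra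
      ultimately have "1 + q^2 \<le> 13/50 * (2 * (1 + q)^2)" using q by linarith
      then show ?thesis using q by (simp add: divide_le_eq)
    qed
    have Cb: "C^2 + (1 + q) / 2 + 13/50 \<le> 3.3 + 1.5 * p + 2 * p^2"
    proof -
      have "C^2 = 625/324 + 50/9 * p^2 + 4 * p^4"
        by (simp add: C_def power2_eq_square power4_eq_xxxx) algebra
      moreover have "p^2 \<le> p / 4" using p by (simp add: power2_eq_square)
      moreover have "p^4 \<le> p^2" using p by (intro power_decreasing) auto
      ultimately have "C^2 \<le> 625/324 + 43/18 * p" by linarith
      then show ?thesis unfolding q_def using p
        by (simp add: field_simps, insert zero_le_power2[of p], linarith)
    qed
    have "R \<le> (C^2 + ((1 + q) / 2 + 13/50) - C^2) / p^2"
      using R_eq r52 p by (simp add: divide_right_mono)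
    then have "2 * real m * \<Phi> m + R + real m ^ 2 \<le> C^2 / p^2 + ((1 + q) / 2 + 13/50) / p^2"
      using A by simp
    also have "\<dots> = (C^2 + (1 + q) / 2 + 13/50) / p^2" by (simp add: add_divide_distrib)
    also have "\<dots> \<le> (3.3 + 1.5 * p + 2 * p^2) / p^2"
      using Cb p by (intro divide_right_mono) auto
    also have "\<dots> = 3.3/p^2 + 3/(2*p) + 2"
      using p by (simp add: field_simps power2_eq_square)
    finally show ?thesis .
  qed
  show ?thesis using sumP b1 sumP2 SP2 b2 by linarith
qed

lemma upper_series:
  fixes p :: real and P :: "nat \<Rightarrow> real"
  assumes p: "0 < p" "p < 1" and P0: "\<And>k. 0 \<le> P k" and P1: "\<And>k. P k \<le> 1"
    and Pt: "\<And>k. P k \<le> (1-p)^(Suc k) / (1 - (1-p)^(Suc k))"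
  shows "summable P \<and> suminf P \<le> 1.5/p + 1 \<and> summable (\<lambda>k. (2*real k+1) * P k)
      \<and> (\<Sum>k. (2*real k+1) * P k) \<le> 3.3/p^2 + 3/(2*p) + 2"
proof (cases "p < 1/4")
  case True then show ?thesis using upper_series_small[OF p(1) True P0 P1 Pt] by blast
next
  case False then show ?thesis using upper_series_big[of p P] p P0 P1 Pt by simp
qed

lemma gap_lengths_finite:
  assumes "finite S" shows "finite (gap_lengths S)"
proof -
  have "gap_lengths S \<subseteq> {..Suc (Max S)}" unfolding gap_lengths_def by auto
  then show ?thesis by (rule finite_subset) simp
qed

lemma longest_gap_ge: "finite S \<Longrightarrow> g \<in> gap_lengths S \<Longrightarrow> g \<le> longest_gap S"
  unfolding longest_gap_def by (intro Max_ge) (auto simp: gap_lengths_finite)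

lemma longest_gap_in: "finite S \<Longrightarrow> longest_gap S \<in> {0} \<union> gap_lengths S"
  unfolding longest_gap_def by (intro Max_in) (auto simp: gap_lengths_finite)

lemma longest_gap_upper:
  assumes S: "finite S" "S \<noteq> {}" and k: "k \<ge> 1" "k \<le> longest_gap S"
  shows "\<exists>a\<ge>1. a - 1 \<in> S \<and> (\<forall>s\<in>S. s \<notin> {a..<a+k}) \<and> (\<exists>s\<in>S. a + k \<le> s)"
proof -
  have "longest_gap S \<in> gap_lengths S" using longest_gap_in[OF S(1)] k by auto
  then obtain a b where g: "longest_gap S = b - a + 1" "Min S \<le> a" "a \<le> b" "b \<le> Max S"
      "{a..b} \<inter> S = {}" "a - 1 \<in> S" "b + 1 \<in> S"
    unfolding gap_lengths_def by blast
  have "a \<notin> S" using g by auto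
  moreover have "Min S \<in> S" using S by simp
  ultimately have "Min S < a" using g(2) by (cases "Min S = a") auto
  then have a1: "a \<ge> 1" by simp
  have "\<forall>s\<in>S. s \<notin> {a..<a+k}"
  proof
    fix s assume "s \<in> S"
    moreover have "{a..<a+k} \<subseteq> {a..b}" using g(1,3) k by auto
    ultimately show "s \<notin> {a..<a+k}" using g(5) by auto
  qed
  moreover have "a + k \<le> b + 1" using g(1,3) k by simp
  ultimately show ?thesis using a1 g(6,7) by blast
qed

lemma longest_gap_lower:
  assumes S: "finite S'" "S' \<noteq> {}" and w: "\<forall>s\<in>S'. s < w" and k: "k \<ge> 1"
  shows "k \<le> longest_gap (insert (w + k) S')"
proof -
  let ?S = "insert (w + k) S'"
  define a where "a = Max S' + 1"
  define b where "b = w + k - 1"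
  have mS: "Max S' \<in> S'" using S by simp
  then have mw: "Max S' < w" using w by auto
  have fS: "finite ?S" using S by simp
  have "b - a + 1 \<in> gap_lengths ?S"
    unfolding gap_lengths_def
  proof (intro CollectI exI conjI)
    show "Min ?S \<le> a" using fS mS by (simp add: a_def Min_le_iff) (metis Max_ge S(1) Min_le_iff fS le_Suc_eq insertI2 mS)
    show "a \<le> b" using mw k by (simp add: a_def b_def)
    show "b \<le> Max ?S" using fS by (simp add: b_def) (metis Max_ge diff_le_self fS insertI1 le_trans)
    show "{a..b} \<inter> ?S = {}"
    proof -
      have "s < a" if "s \<in> S'" for s using Max_ge[OF S(1) that] by (simp add: a_def)
      moreover have "b < w + k" using k by (simp add: b_def)
      ultimately show ?thesis by (auto, fastforce)
    qed
    show "a - 1 \<in> ?S" using mS by (simp add: a_def)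
    show "b + 1 \<in> ?S" using k by (simp add: b_def)
  qed (rule refl)
  moreover have "k \<le> b - a + 1" using mw k by (simp add: a_def b_def)
  ultimately show ?thesis using longest_gap_ge[OF fS] by (meson le_trans)
qed

lemma ev_sum_bound:
  fixes q r :: real and n N :: nat
  assumes q: "0 < q" "q < 1" and r: "0 \<le> r" "r < 1" and n: "n \<ge> 1"
  defines "F \<equiv> \<lambda>z::real. (1 - z) ^ n"
  shows "(\<Sum>b<N. F (q^(b+1) - q^(b+1) * r) - F (q^(b+1)) - F (q^b - q^(b+1) * r) + F (q^b)) \<le> r / (1 - r)"
proof -
  define c where "c = r / (1 - r)"
  have c0: "0 \<le> c" using r by (simp add: c_def)
  define z where "z b = q^b * (1 - r)" for b
  define D where "D b = F (z b) - F (q^b)" for b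
  define E where "E b = F (z b) - F (z b + q^b * (1 - q) * r)" for b
  have qb: "0 < q^b" "q^b \<le> 1" for b using q by (auto simp: power_le_one)
  have tm: "F (q^(b+1) - q^(b+1) * r) - F (q^(b+1)) - F (q^b - q^(b+1) * r) + F (q^b) = D (Suc b) - D b + E b" for b
  proof -
    have "q^(b+1) - q^(b+1) * r = z (Suc b)" by (simp add: z_def algebra_simps)
    moreover have "q^b - q^(b+1) * r = z b + q^b * (1 - q) * r" by (simp add: z_def algebra_simps)
    ultimately show ?thesis by (simp add: D_def E_def)
  qed
  have Eb: "E b \<le> c * (F (z (Suc b)) - F (z b))" for b
  proof -
    define u where "u = 1 - z b"
    define u' where "u' = 1 - z (Suc b)"
    define \<delta> where "\<delta> = q^b * (1 - q) * r"
    have d0: "0 \<le> \<delta>" using qb[of b] q r by (simp add: \<delta>_def)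
    have v0: "0 \<le> u - \<delta>"
    proof -
      have "u - \<delta> = 1 - q^b * (1 - q * r)" by (simp add: u_def \<delta>_def z_def algebra_simps)
      moreover have "q^b * (1 - q * r) \<le> 1 * 1"
        using qb[of b] q r by (intro mult_mono) (auto simp: mult_nonneg_nonneg mult_le_one)
      ultimately show ?thesis by simp
    qed
    have uu2: "u' - u = q^b * (1 - r) * (1 - q)"
      by (simp add: u_def u'_def z_def algebra_simps)
    moreover have "0 \<le> q^b * (1 - r) * (1 - q)" using qb[of b] q r by simp
    ultimately have uu: "u \<le> u'" "u' - u = q^b * (1 - r) * (1 - q)" by auto
    have "E b = u ^ n - (u - \<delta>) ^ n" by (simp add: E_def F_def u_def \<delta>_def algebra_simps)
    also have "\<dots> \<le> real n * (u - (u - \<delta>)) * u ^ (n - 1)"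
      using v0 d0 by (intro pow_diff_upper) auto
    also have "\<dots> = c * (real n * (u' - u) * u ^ (n - 1))"
      using r by (simp add: uu(2) c_def \<delta>_def field_simps)
    also have "\<dots> \<le> c * (u' ^ n - u ^ n)"
      using v0 d0 uu c0 by (intro mult_left_mono pow_diff_lower) auto
    also have "\<dots> = c * (F (z (Suc b)) - F (z b))" by (simp add: F_def u_def u'_def)
    finally show ?thesis .
  qed
  have D0: "D 0 = r ^ n" using n by (simp add: D_def F_def z_def)
  have DN: "D N \<le> c * (1 - F (z N))"
  proof -
    define u where "u = 1 - z N"
    have u0: "0 \<le> u - q^N * r" "u \<le> 1" "0 \<le> q^N * r"
      using qb[of N] r by (auto simp: u_def z_def algebra_simps)
    have "D N = u ^ n - (u - q^N * r) ^ n" by (simp add: D_def F_def u_def z_def algebra_simps)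
    also have "\<dots> \<le> real n * (u - (u - q^N * r)) * u ^ (n - 1)"
      using u0 by (intro pow_diff_upper) auto
    also have "\<dots> = c * (real n * (1 - u) * u ^ (n - 1))"
      using r by (simp add: c_def u_def z_def field_simps)
    also have "\<dots> \<le> c * (1 ^ n - u ^ n)"
      using u0 c0 by (intro mult_left_mono pow_diff_lower) auto
    finally show ?thesis by (simp add: F_def u_def)
  qed
  have "(\<Sum>b<N. F (q^(b+1) - q^(b+1) * r) - F (q^(b+1)) - F (q^b - q^(b+1) * r) + F (q^b))
      = (\<Sum>b<N. D (Suc b) - D b) + (\<Sum>b<N. E b)"
    by (simp only: tm sum.distrib[symmetric])
  also have "(\<Sum>b<N. D (Suc b) - D b) = D N - D 0" by (rule sum_lessThan_telescope)
  also have "(\<Sum>b<N. E b) \<le> (\<Sum>b<N. c * (F (z (Suc b)) - F (z b)))" by (intro sum_mono Eb)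
  also have "\<dots> = c * (F (z N) - F (z 0))" by (simp add: sum_distrib_left[symmetric] sum_lessThan_telescope[of "\<lambda>b. F (z b)"])
  finally have "(\<Sum>b<N. F (q^(b+1) - q^(b+1) * r) - F (q^(b+1)) - F (q^b - q^(b+1) * r) + F (q^b))
      \<le> c * (1 - F (z N)) - r ^ n + c * (F (z N) - F (z 0))" using DN D0 by linarith
  also have "\<dots> = c * (1 - r ^ n) - r ^ n" using n by (simp add: F_def z_def algebra_simps)
  also have "\<dots> \<le> c"
    using c0 r by (simp add: algebra_simps mult_nonneg_nonneg)
  finally show ?thesis by (simp add: c_def)
qed

lemma trap_sum:
  fixes q :: real and n W :: nat
  assumes q: "0 < q" "q < 1" and n: "n \<ge> 2"
  shows "2 * (1 - q^W)^n \<le> (1 + q) * (\<Sum>j<W. real n * (q^j - q^(j+1)) * (1 - q^(j+1))^(n-1))"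
proof -
  define c where "c j = real n * (q^j - q^(j+1)) * (1 - q^(j+1))^(n-1)" for j
  define T where "T W = (\<Sum>j<W. c j)" for W
  define G where "G j = (1 - q^j)^n" for j
  have qj: "q^(j+1) \<le> q^j" "q^j \<le> 1" for j using q by (auto simp: power_le_one intro: power_decreasing)
  have c0: "0 \<le> c j" for j using qj[of j] by (simp add: c_def)
  have step: "2 * (G (Suc W) - G W) \<le> c W + q * (if W = 0 then 0 else c (W - 1))" for W
  proof -
    define u where "u = 1 - q^(W+1)"
    define v where "v = 1 - q^W"
    have uv: "0 \<le> v" "v \<le> u" using qj[of W] by (auto simp: u_def v_def)
    have "2 * (G (Suc W) - G W) = 2 * (u^n - v^n)" by (simp add: G_def u_def v_def)
    also have "\<dots> \<le> real n * (u - v) * (u^(n-1) + v^(n-1))" by (rule pow_trapezoid[OF uv])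
    also have "\<dots> = c W + real n * (u - v) * v^(n-1)"
      by (simp add: c_def u_def v_def algebra_simps)
    also have "real n * (u - v) * v^(n-1) = q * (if W = 0 then 0 else c (W - 1))"
    proof (cases W)
      case 0 then show ?thesis using n by (simp add: v_def)
    next
      case (Suc W')
      then show ?thesis by (simp add: c_def u_def v_def algebra_simps)
    qed
    finally show ?thesis .
  qed
  have ind: "2 * G W \<le> T W + q * T (W - 1)" for W
  proof (induction W)
    case 0 then show ?case using n by (simp add: G_def T_def power_0_left)
  next
    case (Suc W)
    have "q * T W = q * T (W - 1) + q * (if W = 0 then 0 else c (W - 1))"
      by (cases W) (auto simp: T_def algebra_simps)
    then have "T (Suc W) + q * T (Suc W - 1) = (T W + q * T (W - 1)) + (c W + q * (if W = 0 then 0 else c (W - 1)))"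
      by (simp add: T_def)
    moreover obtain e where e: "e = q * (if W = 0 then 0 else c (W - 1))" by simp
    ultimately have "T (Suc W) + q * T (Suc W - 1) = (T W + q * T (W - 1)) + (c W + e)" by simp
    moreover have "2 * (G (Suc W) - G W) \<le> c W + e" using step[of W] e by simp
    moreover obtain t1 where t1: "t1 = T (W - 1)" by simp
    ultimately have h: "T (Suc W) + q * T (Suc W - 1) = (T W + q * t1) + (c W + e)"
      "2 * (G (Suc W) - G W) \<le> c W + e" "2 * G W \<le> T W + q * t1" using Suc by simp_all
    have "2 * G (Suc W) \<le> (T W + q * t1) + (c W + e)" using h(2,3) by (smt (verit))
    then show ?case using h(1) by simp
  qed
  have "T (W - 1) \<le> T W" unfolding T_def by (intro sum_mono2) (auto simp: c0)
  then have "q * T (W - 1) \<le> q * T W" using q by (intro mult_left_mono) auto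
  then have "2 * G W \<le> (1 + q) * T W" using ind[of W] by (simp add: algebra_simps)
  then show ?thesis by (simp add: G_def T_def c_def)
qed

context prob_space begin

lemma nn_tail:
  fixes X :: "'a \<Rightarrow> nat" and d :: "nat \<Rightarrow> real"
  assumes X: "X \<in> measurable M (count_space UNIV)" and d: "\<And>k. 0 \<le> d k"
  shows "(\<integral>\<^sup>+\<omega>. ennreal (\<Sum>k<X \<omega>. d k) \<partial>M) = (\<Sum>k. ennreal (d k) * emeasure M {\<omega> \<in> space M. k < X \<omega>})"
proof -
  have ev: "{\<omega> \<in> space M. k < X \<omega>} \<in> events" for k
  proof -
    have "X -` {x. k < x} \<inter> space M \<in> events" by (rule measurable_sets[OF X]) simp
    moreover have "X -` {x. k < x} \<inter> space M = {\<omega> \<in> space M. k < X \<omega>}" by auto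
    ultimately show ?thesis by simp
  qed
  have pw: "ennreal (\<Sum>k<X \<omega>. d k) = (\<Sum>k. ennreal (d k) * indicator {\<omega> \<in> space M. k < X \<omega>} \<omega>)"
    if "\<omega> \<in> space M" for \<omega>
  proof -
    have "(\<Sum>k. ennreal (d k) * indicator {\<omega> \<in> space M. k < X \<omega>} \<omega>) =
        (\<Sum>k<X \<omega>. ennreal (d k) * indicator {\<omega> \<in> space M. k < X \<omega>} \<omega>)"
      by (rule suminf_finite) (auto simp: that)
    also have "\<dots> = (\<Sum>k<X \<omega>. ennreal (d k))" using that by (intro sum.cong) auto
    also have "\<dots> = ennreal (\<Sum>k<X \<omega>. d k)" using d by simp
    finally show ?thesis by simp
  qed
  have "(\<integral>\<^sup>+\<omega>. ennreal (\<Sum>k<X \<omega>. d k) \<partial>M) = (\<integral>\<^sup>+\<omega>. (\<Sum>k. ennreal (d k) * indicator {\<omega> \<in> space M. k < X \<omega>} \<omega>) \<partial>M)"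
    by (intro nn_integral_cong pw)
  also have "\<dots> = (\<Sum>k. \<integral>\<^sup>+\<omega>. ennreal (d k) * indicator {\<omega> \<in> space M. k < X \<omega>} \<omega> \<partial>M)"
    using ev by (intro nn_integral_suminf) auto
  also have "\<dots> = (\<Sum>k. ennreal (d k) * emeasure M {\<omega> \<in> space M. k < X \<omega>})"
    using ev by (simp add: nn_integral_cmult_indicator)
  finally show ?thesis .
qed

lemma tail_integral:
  fixes X :: "'a \<Rightarrow> nat" and d :: "nat \<Rightarrow> real"
  assumes X: "X \<in> measurable M (count_space UNIV)" and d: "\<And>k. 0 \<le> d k"
    and s: "summable (\<lambda>k. d k * prob {\<omega> \<in> space M. k < X \<omega>})"
  shows "integrable M (\<lambda>\<omega>. \<Sum>k<X \<omega>. d k) \<and>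
    expectation (\<lambda>\<omega>. \<Sum>k<X \<omega>. d k) = (\<Sum>k. d k * prob {\<omega> \<in> space M. k < X \<omega>})"
proof -
  have nn: "(\<integral>\<^sup>+\<omega>. ennreal (\<Sum>k<X \<omega>. d k) \<partial>M) = ennreal (\<Sum>k. d k * prob {\<omega> \<in> space M. k < X \<omega>})"
  proof -
    have "(\<integral>\<^sup>+\<omega>. ennreal (\<Sum>k<X \<omega>. d k) \<partial>M) = (\<Sum>k. ennreal (d k * prob {\<omega> \<in> space M. k < X \<omega>}))"
      using d by (simp add: nn_tail[OF X d] emeasure_eq_measure ennreal_mult)
    also have "\<dots> = ennreal (\<Sum>k. d k * prob {\<omega> \<in> space M. k < X \<omega>})"
      using d s by (intro suminf_ennreal2) auto
    finally show ?thesis .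
  qed
  have meas: "(\<lambda>\<omega>. \<Sum>k<X \<omega>. d k) \<in> borel_measurable M"
  proof -
    have "(\<lambda>x::nat. \<Sum>k<x. d k) \<in> measurable (count_space UNIV) borel" by simp
    then show ?thesis using measurable_comp[OF X, of "\<lambda>x::nat. \<Sum>k<x. d k" borel] by (simp add: comp_def)
  qed
  have nonneg: "0 \<le> (\<Sum>k<x. d k)" for x using d by (simp add: sum_nonneg)
  have int: "integrable M (\<lambda>\<omega>. \<Sum>k<X \<omega>. d k)"
    using meas nonneg nn by (intro integrableI_nonneg) auto
  moreover have "expectation (\<lambda>\<omega>. \<Sum>k<X \<omega>. d k) = (\<Sum>k. d k * prob {\<omega> \<in> space M. k < X \<omega>})"
  proof -
    have "0 \<le> (\<Sum>k. d k * prob {\<omega> \<in> space M. k < X \<omega>})" using d s by (intro suminf_nonneg) auto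
    then show ?thesis using meas nonneg nn by (simp add: integral_eq_nn_integral)
  qed
  ultimately show ?thesis by simp
qed

end

locale geo = prob_space M for M :: "'a measure" +
  fixes Y :: "nat \<Rightarrow> 'a \<Rightarrow> nat" and p :: real
  assumes p: "0 < p" "p < 1"
    and ind: "indep_vars (\<lambda>_. count_space UNIV) Y {1..}"
    and dist: "\<And>i k. i \<ge> 1 \<Longrightarrow> measure M {\<omega> \<in> space M. Y i \<omega> = k} = (1 - p) ^ k * p"
begin

abbreviation "q \<equiv> 1 - p"

lemma q: "0 < q" "q < 1" using p by auto

lemma Y_meas: "i \<ge> 1 \<Longrightarrow> Y i \<in> measurable M (count_space UNIV)"
  using ind unfolding indep_vars_def2 by auto

lemma Y_ev: "i \<ge> 1 \<Longrightarrow> {\<omega> \<in> space M. Y i \<omega> \<in> A} \<in> events"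
proof -
  assume i: "i \<ge> 1"
  have "Y i -` A \<inter> space M \<in> events" using measurable_sets[OF Y_meas[OF i]] by simp
  moreover have "Y i -` A \<inter> space M = {\<omega> \<in> space M. Y i \<omega> \<in> A}" by auto
  ultimately show ?thesis by simp
qed

lemma Y_ev': "i \<ge> 1 \<Longrightarrow> {\<omega> \<in> space M. P (Y i \<omega>)} \<in> events"
  using Y_ev[of i "{k. P k}"] by simp

lemma prob_lt: assumes i: "i \<ge> 1" shows "prob {\<omega> \<in> space M. Y i \<omega> < a} = 1 - q ^ a"
proof (induction a)
  case 0 then show ?case by simp
next
  case (Suc a)
  have "{\<omega> \<in> space M. Y i \<omega> < Suc a} = {\<omega> \<in> space M. Y i \<omega> < a} \<union> {\<omega> \<in> space M. Y i \<omega> = a}"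
    by auto
  moreover have "prob ({\<omega> \<in> space M. Y i \<omega> < a} \<union> {\<omega> \<in> space M. Y i \<omega> = a}) =
      prob {\<omega> \<in> space M. Y i \<omega> < a} + prob {\<omega> \<in> space M. Y i \<omega> = a}"
    by (rule finite_measure_Union) (auto intro: Y_ev' i)
  ultimately have "prob {\<omega> \<in> space M. Y i \<omega> < Suc a} = prob {\<omega> \<in> space M. Y i \<omega> < a} + prob {\<omega> \<in> space M. Y i \<omega> = a}"
    by simp
  also have "\<dots> = 1 - q ^ Suc a" using Suc dist[OF i, of a] by (simp add: algebra_simps)
  finally show ?case .
qed

lemma prob_ge: "i \<ge> 1 \<Longrightarrow> prob {\<omega> \<in> space M. a \<le> Y i \<omega>} = q ^ a"
proof -
  assume i: "i \<ge> 1"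
  have "{\<omega> \<in> space M. a \<le> Y i \<omega>} = space M - {\<omega> \<in> space M. Y i \<omega> < a}" by auto
  then show ?thesis using prob_compl[OF Y_ev'[OF i, of "\<lambda>y. y < a"]] prob_lt[OF i] by simp
qed

lemma prob_out: "i \<ge> 1 \<Longrightarrow> prob {\<omega> \<in> space M. Y i \<omega> \<notin> {a..<a+k}} = 1 - q ^ a + q ^ (a + k)"
proof -
  assume i: "i \<ge> 1"
  have "{\<omega> \<in> space M. Y i \<omega> \<notin> {a..<a+k}} = {\<omega> \<in> space M. Y i \<omega> < a} \<union> {\<omega> \<in> space M. a + k \<le> Y i \<omega>}"
    by auto
  moreover have "prob ({\<omega> \<in> space M. Y i \<omega> < a} \<union> {\<omega> \<in> space M. a + k \<le> Y i \<omega>}) = prob {\<omega> \<in> space M. Y i \<omega> < a} + prob {\<omega> \<in> space M. a + k \<le> Y i \<omega>}"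
    by (rule finite_measure_Union) (auto intro: Y_ev' i)
  ultimately have "prob {\<omega> \<in> space M. Y i \<omega> \<notin> {a..<a+k}} = prob {\<omega> \<in> space M. Y i \<omega> < a} + prob {\<omega> \<in> space M. a + k \<le> Y i \<omega>}"
    by simp
  then show ?thesis using prob_lt[OF i] prob_ge[OF i] by simp
qed

lemma prob_indep:
  assumes J: "finite J" "J \<noteq> {}" "J \<subseteq> {1..}"
  shows "prob {\<omega> \<in> space M. \<forall>i\<in>J. Y i \<omega> \<in> A i} = (\<Prod>i\<in>J. prob {\<omega> \<in> space M. Y i \<omega> \<in> A i})"
proof -
  have "prob (\<Inter>i\<in>J. Y i -` A i \<inter> space M) = (\<Prod>i\<in>J. prob (Y i -` A i \<inter> space M))"
    using J by (intro indep_varsD[OF ind]) auto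
  moreover have "(\<Inter>i\<in>J. Y i -` A i \<inter> space M) = {\<omega> \<in> space M. \<forall>i\<in>J. Y i \<omega> \<in> A i}"
    using J by auto
  moreover have "Y i -` A i \<inter> space M = {\<omega> \<in> space M. Y i \<omega> \<in> A i}" for i by auto
  ultimately show ?thesis by simp
qed

lemma prob_iid:
  assumes J: "finite J" "J \<noteq> {}" "J \<subseteq> {1..}" and c: "\<And>i. i \<ge> 1 \<Longrightarrow> prob {\<omega> \<in> space M. Y i \<omega> \<in> A} = c"
  shows "prob {\<omega> \<in> space M. \<forall>i\<in>J. Y i \<omega> \<in> A} = c ^ card J"
  using prob_indep[OF J, of "\<lambda>_. A"] c J by (simp add: subset_eq)

lemma fun_meas:
  fixes f :: "(nat \<Rightarrow> nat) \<Rightarrow> nat"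
  assumes f: "\<And>y y'. (\<And>i. i \<in> {1..n} \<Longrightarrow> y i = y' i) \<Longrightarrow> f y = f y'"
  shows "(\<lambda>\<omega>. f (\<lambda>i. Y i \<omega>)) \<in> measurable M (count_space UNIV)"
  unfolding measurable_count_space_eq2_countable
proof (intro conjI ballI)
  show "(\<lambda>\<omega>. f (\<lambda>i. Y i \<omega>)) \<in> space M \<rightarrow> UNIV" by simp
  fix c :: nat
  let ?PI = "{y \<in> Pi\<^sub>E {1..n} (\<lambda>_. UNIV :: nat set). f y = c}"
  have "(\<lambda>\<omega>. f (\<lambda>i. Y i \<omega>)) -` {c} \<inter> space M = (\<Union>y\<in>?PI. {\<omega> \<in> space M. \<forall>i\<in>{1..n}. Y i \<omega> = y i})"
  proof (intro equalityI subsetI)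
    fix \<omega> assume "\<omega> \<in> (\<lambda>\<omega>. f (\<lambda>i. Y i \<omega>)) -` {c} \<inter> space M"
    then have \<omega>: "\<omega> \<in> space M" "f (\<lambda>i. Y i \<omega>) = c" by auto
    let ?y = "restrict (\<lambda>i. Y i \<omega>) {1..n}"
    have "f ?y = c" using \<omega> f[of ?y "\<lambda>i. Y i \<omega>"] by simp
    then show "\<omega> \<in> (\<Union>y\<in>?PI. {\<omega> \<in> space M. \<forall>i\<in>{1..n}. Y i \<omega> = y i})"
      using \<omega> by (intro UN_I[of ?y]) auto
  next
    fix \<omega> assume "\<omega> \<in> (\<Union>y\<in>?PI. {\<omega> \<in> space M. \<forall>i\<in>{1..n}. Y i \<omega> = y i})"
    then obtain y where "f y = c" "\<omega> \<in> space M" "\<forall>i\<in>{1..n}. Y i \<omega> = y i" by auto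
    then show "\<omega> \<in> (\<lambda>\<omega>. f (\<lambda>i. Y i \<omega>)) -` {c} \<inter> space M" using f[of "\<lambda>i. Y i \<omega>" y] by simp
  qed
  moreover have "(\<Union>y\<in>?PI. {\<omega> \<in> space M. \<forall>i\<in>{1..n}. Y i \<omega> = y i}) \<in> events"
  proof -
    have "countable ?PI" by (rule countable_subset[OF _ countable_PiE[of "{1..n}" "\<lambda>_. UNIV :: nat set"]]) auto
    moreover have "{\<omega> \<in> space M. \<forall>i\<in>{1..n}. Y i \<omega> = y i} \<in> events" for y
      by (intro sets.sets_Collect_finite_All Y_ev') auto
    ultimately show ?thesis by (intro sets.countable_UN') auto
  qed
  ultimately show "(\<lambda>\<omega>. f (\<lambda>i. Y i \<omega>)) -` {c} \<inter> space M \<in> events" by simp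
qed

lemma L_meas: "(\<lambda>\<omega>. L n (\<lambda>i. Y i \<omega>)) \<in> measurable M (count_space UNIV)"
proof (rule fun_meas)
  fix y y' :: "nat \<Rightarrow> nat" assume "\<And>i. i \<in> {1..n} \<Longrightarrow> y i = y' i"
  then have "y ` {1..n} = y' ` {1..n}" by (intro image_cong) auto
  then show "L n y = L n y'" by (simp add: L_def)
qed


lemma L_ev: "{\<omega> \<in> space M. P (L n (\<lambda>i. Y i \<omega>))} \<in> events"
proof -
  have "(\<lambda>\<omega>. L n (\<lambda>i. Y i \<omega>)) -` {x. P x} \<inter> space M \<in> events"
    by (rule measurable_sets[OF L_meas]) simp
  moreover have "(\<lambda>\<omega>. L n (\<lambda>i. Y i \<omega>)) -` {x. P x} \<inter> space M = {\<omega> \<in> space M. P (L n (\<lambda>i. Y i \<omega>))}"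
    by auto
  ultimately show ?thesis by simp
qed

lemma A_ev: "{\<omega> \<in> space M. \<forall>i\<in>{1..n}. Y i \<omega> \<in> A} \<in> events"
  by (intro sets.sets_Collect_finite_All Y_ev) auto

lemma A_ev_gen: "{\<omega> \<in> space M. \<forall>i\<in>{1..n}. Y i \<omega> \<in> A i} \<in> events"
  by (intro sets.sets_Collect_finite_All Y_ev) auto

lemma tail_upper:
  assumes n: "n \<ge> 1" and k: "k \<ge> 1"
  shows "prob {\<omega> \<in> space M. k \<le> L n (\<lambda>i. Y i \<omega>)} \<le> q^k / (1 - q^k)"
proof -
  define r where "r = q ^ k"
  have r: "0 \<le> r" "r < 1" using q k power_strict_decreasing[of 0 k q] by (auto simp: r_def)
  define F where "F = (\<lambda>z::real. (1 - z) ^ n)"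
  define ev where "ev a = {\<omega> \<in> space M. (\<exists>i\<in>{1..n}. Y i \<omega> = a - 1) \<and> (\<forall>i\<in>{1..n}. Y i \<omega> \<notin> {a..<a+k})
      \<and> (\<exists>i\<in>{1..n}. a + k \<le> Y i \<omega>)}" for a
  define A1 where "A1 a = {\<omega> \<in> space M. \<forall>i\<in>{1..n}. Y i \<omega> \<in> - {a..<a+k}}" for a
  define A2 where "A2 a = {\<omega> \<in> space M. \<forall>i\<in>{1..n}. Y i \<omega> \<in> {..<a}}" for a
  define A3 where "A3 a = {\<omega> \<in> space M. \<forall>i\<in>{1..n}. Y i \<omega> \<in> - {a-1..<(a-1)+(k+1)}}" for a
  define A4 where "A4 a = {\<omega> \<in> space M. \<forall>i\<in>{1..n}. Y i \<omega> \<in> {..<a-1}}" for a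
  have J: "finite {1..n}" "{1..n} \<noteq> {}" "{1..n} \<subseteq> {1::nat..}" using n by auto
  have cardJ: "card {1..n} = n" by simp
  have pA1: "prob (A1 a) = (1 - q^a + q^(a+k))^n" for a
  proof -
    have "prob (A1 a) = (1 - q^a + q^(a+k))^card {1..n}"
      unfolding A1_def by (rule prob_iid[OF J]) (simp only: Compl_iff prob_out)
    then show ?thesis by simp
  qed
  have pA2: "prob (A2 a) = (1 - q^a)^n" for a
  proof -
    have "prob (A2 a) = (1 - q^a)^card {1..n}"
      unfolding A2_def by (rule prob_iid[OF J]) (simp only: lessThan_iff prob_lt)
    then show ?thesis by simp
  qed
  have pA3: "prob (A3 a) = (1 - q^(a-1) + q^((a-1)+(k+1)))^n" for a
  proof -
    have "prob (A3 a) = (1 - q^(a-1) + q^((a-1)+(k+1)))^card {1..n}"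
      unfolding A3_def by (rule prob_iid[OF J]) (simp only: Compl_iff prob_out)
    then show ?thesis by simp
  qed
  have pA4: "prob (A4 a) = (1 - q^(a-1))^n" for a
  proof -
    have "prob (A4 a) = (1 - q^(a-1))^card {1..n}"
      unfolding A4_def by (rule prob_iid[OF J]) (simp only: lessThan_iff prob_lt)
    then show ?thesis by simp
  qed
  have evA: "ev a = A1 a - (A2 a \<union> A3 a)" if "a \<ge> 1" for a
  proof (intro equalityI subsetI)
    fix \<omega> assume "\<omega> \<in> ev a"
    then obtain i j where "\<omega> \<in> space M" "i \<in> {1..n}" "Y i \<omega> = a - 1" "\<forall>i\<in>{1..n}. Y i \<omega> \<notin> {a..<a+k}"
       "j \<in> {1..n}" "a + k \<le> Y j \<omega>" by (auto simp: ev_def)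
    note h = this
    have "\<not> Y j \<omega> < a" using h(6) by simp
    then have "\<omega> \<notin> A2 a" using h(5) by (auto simp: A2_def)
    moreover have "Y i \<omega> \<in> {a-1..<(a-1)+(k+1)}" using h(3) that by simp
    then have "\<omega> \<notin> A3 a" using h(2) by (auto simp: A3_def)
    moreover have "\<omega> \<in> A1 a" using h(1,4) by (auto simp: A1_def)
    ultimately show "\<omega> \<in> A1 a - (A2 a \<union> A3 a)" by blast
  next
    fix \<omega> assume "\<omega> \<in> A1 a - (A2 a \<union> A3 a)"
    then have h: "\<omega> \<in> space M" "\<forall>i\<in>{1..n}. Y i \<omega> \<notin> {a..<a+k}" "\<exists>i\<in>{1..n}. \<not> Y i \<omega> < a"
      "\<exists>i\<in>{1..n}. Y i \<omega> \<in> {a-1..<(a-1)+(k+1)}"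
      by (auto simp: A1_def A2_def A3_def)
    from h(3) obtain i where i: "i \<in> {1..n}" "a \<le> Y i \<omega>" by auto
    from h(4) obtain j where j: "j \<in> {1..n}" "Y j \<omega> \<in> {a-1..<(a-1)+(k+1)}" by auto
    have "a + k \<le> Y i \<omega>" using h(2) i by auto
    moreover have "Y j \<omega> = a - 1"
    proof -
      have "\<not> (a \<le> Y j \<omega> \<and> Y j \<omega> < a + k)" using h(2) j(1) by auto
      then show ?thesis using j(2) that by auto
    qed
    ultimately show "\<omega> \<in> ev a" using h(1,2) i j by (auto simp: ev_def)
  qed
  have A23: "A2 a \<inter> A3 a = A4 a" if "a \<ge> 1" for a
  proof -
    have pw: "\<And>x::nat. (x \<in> {..<a} \<and> x \<in> -{a-1..<(a-1)+(k+1)}) = (x \<in> {..<a-1})" using that by auto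
    show ?thesis unfolding A2_def A3_def A4_def using pw by blast
  qed
  have A231: "A2 a \<union> A3 a \<subseteq> A1 a" if "a \<ge> 1" for a
    using that by (auto simp: A1_def A2_def A3_def)
  have Aev: "A1 a \<in> events" "A2 a \<in> events" "A3 a \<in> events" "A4 a \<in> events" for a
    unfolding A1_def A2_def A3_def A4_def by (rule A_ev)+
  have pev: "prob (ev (Suc b)) = F (q^(b+1) - q^(b+1) * r) - F (q^(b+1)) - F (q^b - q^(b+1) * r) + F (q^b)" for b
  proof -
    have "prob (ev (Suc b)) = prob (A1 (Suc b)) - prob (A2 (Suc b) \<union> A3 (Suc b))"
      using evA[of "Suc b"] A231[of "Suc b"] Aev by (simp add: finite_measure_Diff)
    also have "prob (A2 (Suc b) \<union> A3 (Suc b)) = prob (A2 (Suc b)) + prob (A3 (Suc b)) - prob (A4 (Suc b))"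
      using measure_Un3[of "A2 (Suc b)" M "A3 (Suc b)"] A23[of "Suc b"] Aev by (simp add: fmeasurable_eq_sets)
    finally have "prob (ev (Suc b)) = prob (A1 (Suc b)) - prob (A2 (Suc b)) - prob (A3 (Suc b)) + prob (A4 (Suc b))"
      by simp
    also have "\<dots> = F (q^(b+1) - q^(b+1) * r) - F (q^(b+1)) - F (q^b - q^(b+1) * r) + F (q^b)"
      unfolding pA1 pA2 pA3 pA4 F_def r_def by (simp add: power_add algebra_simps)
    finally show ?thesis .
  qed
  have sub: "{\<omega> \<in> space M. k \<le> L n (\<lambda>i. Y i \<omega>)} \<subseteq> (\<Union>b. ev (Suc b))"
  proof
    fix \<omega> assume "\<omega> \<in> {\<omega> \<in> space M. k \<le> L n (\<lambda>i. Y i \<omega>)}"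
    then have \<omega>: "\<omega> \<in> space M" "k \<le> longest_gap ((\<lambda>i. Y i \<omega>) ` {1..n})" by (auto simp: L_def)
    have "finite ((\<lambda>i. Y i \<omega>) ` {1..n})" "(\<lambda>i. Y i \<omega>) ` {1..n} \<noteq> {}" using n by auto
    from longest_gap_upper[OF this k \<omega>(2)] obtain a where a: "a \<ge> 1" "a - 1 \<in> (\<lambda>i. Y i \<omega>) ` {1..n}"
      "\<forall>s\<in>(\<lambda>i. Y i \<omega>) ` {1..n}. s \<notin> {a..<a+k}" "\<exists>s\<in>(\<lambda>i. Y i \<omega>) ` {1..n}. a + k \<le> s" by blast
    from a(2) obtain i where i: "i \<in> {1..n}" "Y i \<omega> = a - 1" by auto
    from a(4) obtain j where j: "j \<in> {1..n}" "a + k \<le> Y j \<omega>" by auto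
    have "\<forall>i\<in>{1..n}. Y i \<omega> \<notin> {a..<a+k}" using a(3) by auto
    then have "\<omega> \<in> ev a" using \<omega>(1) i j unfolding ev_def by blast
    moreover have "a = Suc (a - 1)" using a(1) by simp
    ultimately show "\<omega> \<in> (\<Union>b. ev (Suc b))" by (metis UNIV_I UN_I)
  qed
  have evs: "ev (Suc b) \<in> events" for b using evA[of "Suc b"] Aev by auto
  have "emeasure M {\<omega> \<in> space M. k \<le> L n (\<lambda>i. Y i \<omega>)} \<le> emeasure M (\<Union>b. ev (Suc b))"
    using sub evs by (intro emeasure_mono) auto
  also have "\<dots> \<le> (\<Sum>b. emeasure M (ev (Suc b)))"
    using evs by (intro emeasure_subadditive_countably) auto
  also have "\<dots> \<le> ennreal (r / (1 - r))"
  proof (rule suminf_le_const)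
    show "summable (\<lambda>b. emeasure M (ev (Suc b)))" by simp
    fix N
    have "(\<Sum>b<N. emeasure M (ev (Suc b))) = (\<Sum>b<N. ennreal (prob (ev (Suc b))))"
      by (simp add: emeasure_eq_measure)
    also have "\<dots> = ennreal (\<Sum>b<N. prob (ev (Suc b)))" by (simp add: sum_ennreal)
    also have "\<dots> \<le> ennreal (r / (1 - r))"
      using ev_sum_bound[OF q r n, of N] by (intro ennreal_leI) (simp add: pev F_def)
    finally show "(\<Sum>b<N. emeasure M (ev (Suc b))) \<le> ennreal (r / (1 - r))" .
  qed
  finally have "ennreal (prob {\<omega> \<in> space M. k \<le> L n (\<lambda>i. Y i \<omega>)}) \<le> ennreal (r / (1 - r))"
    by (simp add: emeasure_eq_measure)
  then show ?thesis using r by (simp add: r_def ennreal_le_iff divide_nonneg_nonneg)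
qed


lemma tail_lower_W:
  assumes n: "n \<ge> 2" and k: "k \<ge> 1"
  shows "q^(k+1) * (\<Sum>j<W. real n * (q^j - q^(j+1)) * (1 - q^(j+1))^(n-1))
           \<le> prob {\<omega> \<in> space M. k \<le> L n (\<lambda>i. Y i \<omega>)}"
proof -
  define I where "I = {1..n} \<times> {..<W}"
  define A where "A i j l = (if l = i then {j+1+k} else {..<j+1})" for i j l :: nat
  define G where "G ij = {\<omega> \<in> space M. \<forall>l\<in>{1..n}. Y l \<omega> \<in> A (fst ij) (snd ij) l}" for ij
  have J: "finite {1..n}" "{1..n} \<noteq> {}" "{1..n} \<subseteq> {1::nat..}" using n by auto
  have pG: "prob (G (i, j)) = p * q^(j+1+k) * (1 - q^(j+1))^(n-1)" if i: "i \<in> {1..n}" for i j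
  proof -
    have "prob (G (i, j)) = (\<Prod>l\<in>{1..n}. prob {\<omega> \<in> space M. Y l \<omega> \<in> A i j l})"
      unfolding G_def using prob_indep[OF J, of "A i j"] by simp
    also have "\<dots> = prob {\<omega> \<in> space M. Y i \<omega> \<in> A i j i} * (\<Prod>l\<in>{1..n}-{i}. prob {\<omega> \<in> space M. Y l \<omega> \<in> A i j l})"
      using i by (simp add: prod.remove)
    also have "prob {\<omega> \<in> space M. Y i \<omega> \<in> A i j i} = q^(j+1+k) * p"
      using i dist[of i "j+1+k"] by (simp add: A_def)
    also have "(\<Prod>l\<in>{1..n}-{i}. prob {\<omega> \<in> space M. Y l \<omega> \<in> A i j l}) = (\<Prod>l\<in>{1..n}-{i}. 1 - q^(j+1))"
      by (intro prod.cong refl) (auto simp: A_def prob_lt)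
    also have "\<dots> = (1 - q^(j+1))^(n-1)" using i by simp
    finally show ?thesis by simp
  qed
  have Gev: "G ij \<in> events" for ij unfolding G_def by (rule A_ev_gen)
  have disj: "disjoint_family_on G I"
    unfolding disjoint_family_on_def
  proof (intro ballI impI)
    fix ij ij' assume ij: "ij \<in> I" "ij' \<in> I" "ij \<noteq> ij'"
    obtain i j i' j' where e: "ij = (i, j)" "ij' = (i', j')" by fastforce
    show "G ij \<inter> G ij' = {}"
    proof (rule ccontr)
      assume "G ij \<inter> G ij' \<noteq> {}"
      then obtain \<omega> where \<omega>: "\<omega> \<in> G ij" "\<omega> \<in> G ij'" by auto
      have ii: "i \<in> {1..n}" "i' \<in> {1..n}" using ij e by (auto simp: I_def)
      have h1: "\<forall>l\<in>{1..n}. Y l \<omega> \<in> A i j l" "\<forall>l\<in>{1..n}. Y l \<omega> \<in> A i' j' l"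
        using \<omega> e by (auto simp: G_def)
      have y1: "Y i \<omega> = j+1+k" using bspec[OF h1(1) ii(1)] by (simp add: A_def)
      have y2: "Y i' \<omega> = j'+1+k" using bspec[OF h1(2) ii(2)] by (simp add: A_def)
      show False
      proof (cases "i = i'")
        case True
        then have "j = j'" using y1 y2 by simp
        then show False using True ij(3) e by simp
      next
        case False
        have "Y i \<omega> < j'+1" using bspec[OF h1(2) ii(1)] False by (simp add: A_def)
        moreover have "Y i' \<omega> < j+1" using bspec[OF h1(1) ii(2)] False by (simp add: A_def)
        ultimately show False using y1 y2 by simp
      qed
    qed
  qed
  have sub: "(\<Union>ij\<in>I. G ij) \<subseteq> {\<omega> \<in> space M. k \<le> L n (\<lambda>i. Y i \<omega>)}"
  proof
    fix \<omega> assume "\<omega> \<in> (\<Union>ij\<in>I. G ij)"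
    then obtain i j where ij: "(i, j) \<in> I" "\<omega> \<in> G (i, j)" by auto
    have i: "i \<in> {1..n}" using ij by (auto simp: I_def)
    have h: "\<omega> \<in> space M" "\<forall>l\<in>{1..n}. Y l \<omega> \<in> A i j l" using ij by (auto simp: G_def)
    let ?S' = "(\<lambda>l. Y l \<omega>) ` ({1..n} - {i})"
    have "\<exists>l. l \<in> {1..n} - {i}" using n i by (cases "i = 1") (auto intro: exI[of _ 1] exI[of _ 2])
    then have ne: "?S' \<noteq> {}" by blast
    have lt: "\<forall>s\<in>?S'. s < j + 1"
    proof
      fix s assume "s \<in> ?S'"
      then obtain l where l: "l \<in> {1..n}" "l \<noteq> i" "s = Y l \<omega>" by blast
      then show "s < j + 1" using bspec[OF h(2) l(1)] by (simp add: A_def)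
    qed
    have "(\<lambda>l. Y l \<omega>) ` {1..n} = insert (Y i \<omega>) ?S'" using i by blast
    moreover have "Y i \<omega> = (j + 1) + k" using bspec[OF h(2) i] by (simp add: A_def)
    ultimately have "(\<lambda>l. Y l \<omega>) ` {1..n} = insert ((j + 1) + k) ?S'" by simp
    then have "k \<le> longest_gap ((\<lambda>l. Y l \<omega>) ` {1..n})"
      using longest_gap_lower[of ?S' "j+1" k] ne lt k by simp
    then show "\<omega> \<in> {\<omega> \<in> space M. k \<le> L n (\<lambda>i. Y i \<omega>)}" using h(1) by (simp add: L_def)
  qed
  have "prob (\<Union>ij\<in>I. G ij) = (\<Sum>ij\<in>I. prob (G ij))"
    using disj Gev by (intro finite_measure_finite_Union) (auto simp: I_def)
  also have "\<dots> = (\<Sum>(i,j)\<in>{1..n} \<times> {..<W}. p * q^(j+1+k) * (1 - q^(j+1))^(n-1))"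
    unfolding I_def by (intro sum.cong refl) (auto simp: pG)
  also have "\<dots> = (\<Sum>i\<in>{1..n}. \<Sum>j<W. p * q^(j+1+k) * (1 - q^(j+1))^(n-1))"
    by (rule sum.cartesian_product[symmetric])
  also have "\<dots> = q^(k+1) * (\<Sum>j<W. real n * (q^j - q^(j+1)) * (1 - q^(j+1))^(n-1))"
    by (simp add: sum_distrib_left algebra_simps power_add)
  finally have "q^(k+1) * (\<Sum>j<W. real n * (q^j - q^(j+1)) * (1 - q^(j+1))^(n-1)) = prob (\<Union>ij\<in>I. G ij)" by simp
  also have "\<dots> \<le> prob {\<omega> \<in> space M. k \<le> L n (\<lambda>i. Y i \<omega>)}"
    using sub L_ev by (intro finite_measure_mono) auto
  finally show ?thesis .
qed


lemma tail_lower: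
  assumes n: "n \<ge> 2" and k: "k \<ge> 1"
  shows "2 * q^(k+1) / (1 + q) \<le> prob {\<omega> \<in> space M. k \<le> L n (\<lambda>i. Y i \<omega>)}"
proof -
  define c where "c W = q^(k+1) * (2 * (1 - q^W)^n) / (1 + q)" for W :: nat
  have "c \<longlonglongrightarrow> q^(k+1) * (2 * (1 - 0)^n) / (1 + q)"
    unfolding c_def using q by (intro tendsto_intros LIMSEQ_power_zero) auto
  moreover have "c W \<le> prob {\<omega> \<in> space M. k \<le> L n (\<lambda>i. Y i \<omega>)}" for W
  proof -
    obtain S where S: "S = (\<Sum>j<W. real n * (q^j - q^(j+1)) * (1 - q^(j+1))^(n-1))" by simp
    have "2 * (1 - q^W)^n \<le> (1 + q) * S"
      unfolding S by (rule trap_sum[OF q n])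
    then have "2 * (1 - q^W)^n / (1 + q) \<le> S" using q by (simp add: divide_le_eq mult.commute)
    then have "q^(k+1) * (2 * (1 - q^W)^n / (1 + q)) \<le> q^(k+1) * S" using q by (intro mult_left_mono) auto
    then have "c W \<le> q^(k+1) * (\<Sum>j<W. real n * (q^j - q^(j+1)) * (1 - q^(j+1))^(n-1))"
      unfolding c_def S by simp
    also have "\<dots> \<le> prob {\<omega> \<in> space M. k \<le> L n (\<lambda>i. Y i \<omega>)}" by (rule tail_lower_W[OF n k])
    finally show ?thesis .
  qed
  ultimately have "q^(k+1) * (2 * (1 - 0)^n) / (1 + q) \<le> prob {\<omega> \<in> space M. k \<le> L n (\<lambda>i. Y i \<omega>)}"
    by (intro LIMSEQ_le_const2) auto
  moreover have "q^(k+1) * (2 * (1 - 0)^n) / (1 + q) = 2 * q^(k+1) / (1 + q)" by simp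
  ultimately show ?thesis by linarith
qed

lemma moments:
  assumes n: "n \<ge> 1"
  defines "X \<equiv> \<lambda>\<omega>. L n (\<lambda>i. Y i \<omega>)"
  shows "integrable M (\<lambda>\<omega>. real (X \<omega>)) \<and> integrable M (\<lambda>\<omega>. (real (X \<omega>))\<^sup>2) \<and>
    expectation (\<lambda>\<omega>. real (X \<omega>)) \<le> 1.5/p + 1 \<and>
    expectation (\<lambda>\<omega>. (real (X \<omega>))\<^sup>2) \<le> 3.3/p^2 + 3/(2*p) + 2 \<and>
    0 \<le> expectation (\<lambda>\<omega>. real (X \<omega>)) \<and> 0 \<le> expectation (\<lambda>\<omega>. (real (X \<omega>))\<^sup>2) \<and>
    (n \<ge> 2 \<longrightarrow> q^2/p \<le> expectation (\<lambda>\<omega>. real (X \<omega>)) \<and> 2*q^2/p^2 \<le> expectation (\<lambda>\<omega>. (real (X \<omega>))\<^sup>2))"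
proof -
  define P where "P k = prob {\<omega> \<in> space M. k < X \<omega>}" for k
  have Xm: "X \<in> measurable M (count_space UNIV)" unfolding X_def by (rule L_meas)
  have Pup: "P k \<le> (1-p)^(Suc k) / (1 - (1-p)^(Suc k))" for k
  proof -
    have "{\<omega> \<in> space M. k < X \<omega>} = {\<omega> \<in> space M. Suc k \<le> L n (\<lambda>i. Y i \<omega>)}" by (auto simp: X_def)
    then show ?thesis using tail_upper[OF n, of "Suc k"] by (simp add: P_def)
  qed
  have P0: "0 \<le> P k" for k by (simp add: P_def)
  have P1: "P k \<le> 1" for k by (simp add: P_def)
  have U: "summable P \<and> suminf P \<le> 1.5/p + 1 \<and> summable (\<lambda>k. (2*real k+1) * P k)
      \<and> (\<Sum>k. (2*real k+1) * P k) \<le> 3.3/p^2 + 3/(2*p) + 2"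
    by (rule upper_series[OF p P0 P1 Pup])
  have Peq: "P = (\<lambda>k. prob {\<omega> \<in> space M. k < X \<omega>})" by (simp add: P_def fun_eq_iff)
  have e1: "real (X \<omega>) = (\<Sum>k<X \<omega>. 1)" for \<omega> by simp
  have e2: "(real (X \<omega>))\<^sup>2 = (\<Sum>k<X \<omega>. 2 * real k + 1)" for \<omega> using sum_odd_nat[of "X \<omega>"] by simp
  have T1: "integrable M (\<lambda>\<omega>. \<Sum>k<X \<omega>. (1::real)) \<and> expectation (\<lambda>\<omega>. \<Sum>k<X \<omega>. (1::real)) = (\<Sum>k. 1 * P k)"
    using tail_integral[OF Xm, of "\<lambda>_. 1"] U unfolding Peq by simp
  have T2: "integrable M (\<lambda>\<omega>. \<Sum>k<X \<omega>. 2 * real k + 1) \<and>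
      expectation (\<lambda>\<omega>. \<Sum>k<X \<omega>. 2 * real k + 1) = (\<Sum>k. (2 * real k + 1) * P k)"
    using tail_integral[OF Xm, of "\<lambda>k. 2 * real k + 1"] U unfolding Peq by simp
  have I1: "integrable M (\<lambda>\<omega>. real (X \<omega>))" and E1: "expectation (\<lambda>\<omega>. real (X \<omega>)) = suminf P"
    using T1 by (simp_all add: e1[symmetric])
  have I2: "integrable M (\<lambda>\<omega>. (real (X \<omega>))\<^sup>2)" and E2: "expectation (\<lambda>\<omega>. (real (X \<omega>))\<^sup>2) = (\<Sum>k. (2 * real k + 1) * P k)"
    using T2 by (simp_all only: e2[symmetric])
  have nn1: "0 \<le> suminf P" using U P0 by (intro suminf_nonneg) auto
  have nn2: "0 \<le> (\<Sum>k. (2 * real k + 1) * P k)" using U P0 by (intro suminf_nonneg) auto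
  have low: "q^2/p \<le> suminf P \<and> 2*q^2/p^2 \<le> (\<Sum>k. (2 * real k + 1) * P k)" if n2: "n \<ge> 2"
  proof -
    define a where "a = 2 * q^2 / (1 + q)"
    have Plow: "a * q^k \<le> P k" for k
    proof -
      have "{\<omega> \<in> space M. k < X \<omega>} = {\<omega> \<in> space M. Suc k \<le> L n (\<lambda>i. Y i \<omega>)}" by (auto simp: X_def)
      then have "2 * q^(Suc k + 1) / (1 + q) \<le> P k" using tail_lower[OF n2, of "Suc k"] by (simp add: P_def)
      moreover have "2 * q^(Suc k + 1) / (1 + q) = a * q^k" by (simp add: a_def power2_eq_square field_simps)
      ultimately show ?thesis by simp
    qed
    have g: "(\<lambda>k. a * q^k) sums (a * (1 / (1 - q)))" using q by (intro sums_mult geometric_sums) auto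
    have g2: "(\<lambda>k. a * ((2 * real k + 1) * q^k)) sums (a * ((1 + q) / (1 - q)\<^sup>2))"
      using q by (intro sums_mult sums_odd_geom) auto
    have "a * (1 / (1 - q)) \<le> suminf P"
      using suminf_le[OF Plow sums_summable[OF g]] U sums_unique[OF g] by simp
    moreover have "q^2/p \<le> a * (1 / (1 - q))"
    proof -
      have "1 \<le> 2 / (1 + q)" using q by simp
      then have "q^2 * 1 \<le> q^2 * (2 / (1 + q))" by (intro mult_left_mono) auto
      then have "q^2 / p \<le> q^2 * (2 / (1 + q)) / p" using p by (intro divide_right_mono) auto
      also have "\<dots> = a * (1 / (1 - q))" by (simp add: a_def)
      finally show ?thesis .
    qed
    moreover have "a * ((1 + q) / (1 - q)\<^sup>2) \<le> (\<Sum>k. (2 * real k + 1) * P k)"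
    proof -
      have "a * ((2 * real k + 1) * q^k) \<le> (2 * real k + 1) * P k" for k
      proof -
        have "(2 * real k + 1) * (a * q^k) \<le> (2 * real k + 1) * P k" by (rule mult_left_mono[OF Plow]) simp
        then show ?thesis by (simp add: ac_simps)
      qed
      then show ?thesis using suminf_le[OF _ sums_summable[OF g2]] U sums_unique[OF g2] by simp
    qed
    moreover have "a * ((1 + q) / (1 - q)\<^sup>2) = 2*q^2/p^2" using q by (simp add: a_def)
    ultimately show ?thesis by linarith
  qed
  show ?thesis using I1 I2 E1 E2 U nn1 nn2 low by simp
qed

end

lemma var_alg:
  fixes p :: real assumes p: "0 < p"
  shows "3.3/p^2 + 3/(2*p) + 2 - ((1-p)^2/p)^2 \<le> 2.3/p^2 + 5.5/p"
proof -
  have "3.3/p^2 + 3/(2*p) + 2 - ((1-p)^2/p)^2 = 2.3/p^2 + 5.5/p - (2-p)^2"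
    using p by (simp add: field_simps power2_eq_square power4_eq_xxxx)
  then show ?thesis by simp
qed

theorem lemma2:
  fixes M :: "'a measure" and Y :: "nat \<Rightarrow> 'a \<Rightarrow> nat" and p :: real
  assumes "prob_space M"
    and "0 < p" and "p < 1"
    and "prob_space.indep_vars M (\<lambda>_. count_space UNIV) Y {1..}"
    and "\<And>i k. i \<ge> 1 \<Longrightarrow> measure M {\<omega> \<in> space M. Y i \<omega> = k} = (1 - p) ^ k * p"
  defines "EL \<equiv> \<lambda>n. prob_space.expectation M (\<lambda>\<omega>. real (L n (\<lambda>i. Y i \<omega>)))"
    and "EL2 \<equiv> \<lambda>n. prob_space.expectation M (\<lambda>\<omega>. (real (L n (\<lambda>i. Y i \<omega>)))\<^sup>2)"
    and "VL \<equiv> \<lambda>n. prob_space.variance M (\<lambda>\<omega>. real (L n (\<lambda>i. Y i \<omega>)))"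
  shows "(\<forall>n\<ge>1.
           integrable M (\<lambda>\<omega>. real (L n (\<lambda>i. Y i \<omega>))) \<and>
           integrable M (\<lambda>\<omega>. (real (L n (\<lambda>i. Y i \<omega>)))\<^sup>2) \<and>
           (1 - p)\<^sup>2 / p - (1 - p) ^ (2 * n) / (1 - (1 - p) ^ n) \<le> EL n \<and>
           EL n \<le> 1.5 / p + 1 \<and>
           2 * (1 - p)\<^sup>2 / p\<^sup>2 - 2 * (1 - p) ^ (2 * n) / (1 - (1 - p) ^ n)\<^sup>2 \<le> EL2 n \<and>
           EL2 n \<le> 3.3 / p\<^sup>2 + 3 / (2 * p) + 2 \<and>
           0 \<le> VL n \<and>
           VL n \<le> 3.3 / p\<^sup>2 + 3 / (2 * p) + 2
                   - ((1 - p)\<^sup>2 / p - (1 - p) ^ (2 * n) / (1 - (1 - p) ^ n))\<^sup>2) \<and>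
    ereal ((1 - p)\<^sup>2 / p) \<le> liminf (\<lambda>n. ereal (EL n)) \<and>
    limsup (\<lambda>n. ereal (EL n)) \<le> ereal (1.5 / p + 1) \<and>
    ereal (2 * (1 - p)\<^sup>2 / p\<^sup>2) \<le> liminf (\<lambda>n. ereal (EL2 n)) \<and>
    limsup (\<lambda>n. ereal (EL2 n)) \<le> ereal (3.3 / p\<^sup>2 + 3 / (2 * p) + 2) \<and>
    ereal 0 \<le> liminf (\<lambda>n. ereal (VL n)) \<and>
    limsup (\<lambda>n. ereal (VL n)) \<le> ereal (2.3 / p\<^sup>2 + 5.5 / p)"
proof -
  interpret g: geo M Y p
    using assms(1-5) by (simp add: geo_def geo_axioms_def)
  define lo where "lo n = (1 - p)\<^sup>2 / p - (1 - p) ^ (2 * n) / (1 - (1 - p) ^ n)" for n :: nat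
  define lo2 where "lo2 n = 2 * (1 - p)\<^sup>2 / p\<^sup>2 - 2 * (1 - p) ^ (2 * n) / (1 - (1 - p) ^ n)\<^sup>2" for n :: nat
  define up2 where "up2 = 3.3 / p\<^sup>2 + 3 / (2 * p) + 2"
  have p: "0 < p" "p < 1" using assms by auto
  have qn: "0 < 1 - (1-p)^n" if "n \<ge> 1" for n :: nat
  proof -
    have "(1-p)^n \<le> (1-p)^1" using p that by (intro power_decreasing) auto
    then show ?thesis using p by simp
  qed
  have lo_le: "lo n \<le> (1-p)^2/p" if "n \<ge> 1" for n
    using qn[OF that] by (simp add: lo_def divide_nonneg_pos)
  have lo2_le: "lo2 n \<le> 2*(1-p)^2/p^2" if "n \<ge> 1" for n
    using qn[OF that] by (simp add: lo2_def divide_nonneg_pos)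
  have lo_nn: "0 \<le> lo n" if "n \<ge> 1" for n
  proof -
    have "(1-p)^(2*n) \<le> (1-p)^2" using p that by (intro power_decreasing) auto
    moreover have "p \<le> 1 - (1-p)^n"
    proof -
      have "(1-p)^n \<le> (1-p)^1" using p that by (intro power_decreasing) auto
      then show ?thesis by simp
    qed
    ultimately have "(1-p)^(2*n) / (1 - (1-p)^n) \<le> (1-p)^2 / p"
      using p by (intro frac_le) auto
    then show ?thesis by (simp add: lo_def)
  qed
  have lo1: "lo 1 = 0" using p by (simp add: lo_def)
  have lo21: "lo2 1 = 0" using p by (simp add: lo2_def)
  have main: "integrable M (\<lambda>\<omega>. real (L n (\<lambda>i. Y i \<omega>))) \<and>
           integrable M (\<lambda>\<omega>. (real (L n (\<lambda>i. Y i \<omega>)))\<^sup>2) \<and>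
           lo n \<le> EL n \<and> EL n \<le> 1.5 / p + 1 \<and> lo2 n \<le> EL2 n \<and> EL2 n \<le> up2 \<and>
           0 \<le> VL n \<and> VL n \<le> up2 - (lo n)\<^sup>2 \<and> VL n = EL2 n - (EL n)^2 \<and>
           (n \<ge> 2 \<longrightarrow> (1-p)^2/p \<le> EL n \<and> 2*(1-p)^2/p^2 \<le> EL2 n)" if n: "n \<ge> 1" for n
  proof -
    note m = g.moments[OF n]
    have I1: "integrable M (\<lambda>\<omega>. real (L n (\<lambda>i. Y i \<omega>)))" and I2: "integrable M (\<lambda>\<omega>. (real (L n (\<lambda>i. Y i \<omega>)))\<^sup>2)"
      using m by auto
    have E: "EL n \<le> 1.5 / p + 1" "EL2 n \<le> up2" "0 \<le> EL n" "0 \<le> EL2 n"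
      "n \<ge> 2 \<longrightarrow> (1-p)^2/p \<le> EL n \<and> 2*(1-p)^2/p^2 \<le> EL2 n"
      using m by (auto simp: EL_def EL2_def up2_def)
    have loE: "lo n \<le> EL n"
    proof (cases "n = 1")
      case True then show ?thesis using lo1 E by simp
    next
      case False then show ?thesis using n E(5) lo_le[OF n] by auto
    qed
    have lo2E: "lo2 n \<le> EL2 n"
    proof (cases "n = 1")
      case True then show ?thesis using lo21 E by simp
    next
      case False then show ?thesis using n E(5) lo2_le[OF n] by auto
    qed
    have Veq: "VL n = EL2 n - (EL n)^2"
      unfolding VL_def EL_def EL2_def using g.variance_eq[OF I1 I2] by simp
    have V0: "0 \<le> VL n" unfolding VL_def by (intro integral_nonneg_AE) auto
    have "(lo n)^2 \<le> (EL n)^2" using lo_nn[OF n] loE by (intro power_mono) auto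
    then have "VL n \<le> up2 - (lo n)\<^sup>2" using Veq E(2) by simp
    then show ?thesis using I1 I2 loE lo2E E V0 Veq by simp
  qed
  have ev2: "eventually (\<lambda>n. n \<ge> (2::nat)) sequentially" by (rule eventually_ge_at_top)
  have L1: "ereal ((1 - p)\<^sup>2 / p) \<le> liminf (\<lambda>n. ereal (EL n))"
    by (intro Liminf_bounded eventually_mono[OF ev2]) (use main in auto)
  have L2: "limsup (\<lambda>n. ereal (EL n)) \<le> ereal (1.5 / p + 1)"
    by (intro Limsup_bounded eventually_mono[OF ev2]) (use main in auto)
  have L3: "ereal (2 * (1 - p)\<^sup>2 / p\<^sup>2) \<le> liminf (\<lambda>n. ereal (EL2 n))"
    by (intro Liminf_bounded eventually_mono[OF ev2]) (use main in auto)
  have L4: "limsup (\<lambda>n. ereal (EL2 n)) \<le> ereal (3.3 / p\<^sup>2 + 3 / (2 * p) + 2)"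
    by (intro Limsup_bounded eventually_mono[OF ev2]) (use main in \<open>auto simp: up2_def\<close>)
  have L5: "ereal 0 \<le> liminf (\<lambda>n. ereal (VL n))"
  proof (intro Liminf_bounded eventually_mono[OF ev2])
    fix n :: nat assume "n \<ge> 2"
    then have n1: "n \<ge> 1" by simp
    have "0 \<le> VL n" using main[OF n1] by blast
    then show "ereal 0 \<le> ereal (VL n)" by simp
  qed
  have L6: "limsup (\<lambda>n. ereal (VL n)) \<le> ereal (2.3 / p\<^sup>2 + 5.5 / p)"
  proof (intro Limsup_bounded eventually_mono[OF ev2])
    fix n :: nat assume n2: "n \<ge> 2"
    then have n1: "n \<ge> 1" by simp
    have h: "(1-p)^2/p \<le> EL n" "VL n = EL2 n - (EL n)^2" "EL2 n \<le> up2" using main[OF n1] n2 by auto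
    have "((1-p)^2/p)^2 \<le> (EL n)^2" using h(1) p by (intro power_mono) auto
    then have "VL n \<le> up2 - ((1-p)^2/p)^2" using h by simp
    also have "\<dots> \<le> 2.3 / p\<^sup>2 + 5.5 / p" unfolding up2_def by (rule var_alg[OF p(1)])
    finally show "ereal (VL n) \<le> ereal (2.3 / p\<^sup>2 + 5.5 / p)" by simp
  qed
  have A: "\<forall>n\<ge>1.
           integrable M (\<lambda>\<omega>. real (L n (\<lambda>i. Y i \<omega>))) \<and>
           integrable M (\<lambda>\<omega>. (real (L n (\<lambda>i. Y i \<omega>)))\<^sup>2) \<and>
           (1 - p)\<^sup>2 / p - (1 - p) ^ (2 * n) / (1 - (1 - p) ^ n) \<le> EL n \<and>
           EL n \<le> 1.5 / p + 1 \<and>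
           2 * (1 - p)\<^sup>2 / p\<^sup>2 - 2 * (1 - p) ^ (2 * n) / (1 - (1 - p) ^ n)\<^sup>2 \<le> EL2 n \<and>
           EL2 n \<le> 3.3 / p\<^sup>2 + 3 / (2 * p) + 2 \<and>
           0 \<le> VL n \<and>
           VL n \<le> 3.3 / p\<^sup>2 + 3 / (2 * p) + 2
                   - ((1 - p)\<^sup>2 / p - (1 - p) ^ (2 * n) / (1 - (1 - p) ^ n))\<^sup>2"
  proof (intro allI impI)
    fix n :: nat assume n: "n \<ge> 1"
    show "integrable M (\<lambda>\<omega>. real (L n (\<lambda>i. Y i \<omega>))) \<and>
           integrable M (\<lambda>\<omega>. (real (L n (\<lambda>i. Y i \<omega>)))\<^sup>2) \<and>
           (1 - p)\<^sup>2 / p - (1 - p) ^ (2 * n) / (1 - (1 - p) ^ n) \<le> EL n \<and>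
           EL n \<le> 1.5 / p + 1 \<and>
           2 * (1 - p)\<^sup>2 / p\<^sup>2 - 2 * (1 - p) ^ (2 * n) / (1 - (1 - p) ^ n)\<^sup>2 \<le> EL2 n \<and>
           EL2 n \<le> 3.3 / p\<^sup>2 + 3 / (2 * p) + 2 \<and>
           0 \<le> VL n \<and>
           VL n \<le> 3.3 / p\<^sup>2 + 3 / (2 * p) + 2
                   - ((1 - p)\<^sup>2 / p - (1 - p) ^ (2 * n) / (1 - (1 - p) ^ n))\<^sup>2"
      using main[OF n] unfolding lo_def lo2_def up2_def by blast
  qed
  show ?thesis using A L1 L2 L3 L4 L5 L6 by blast
qed

end
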